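(* Let $\Psi=\{\psi_i\}_{i\in I}$ be a lower frame sequence in a separable Hilbert space $\mathcal{H}$ with canonical dual $\widetilde\Psi=\{\widetilde\psi_i\}$. Then the pseudo-inverse of the closed operator $\overline{D^r_\Psi}$ is given by $$\overline{D^r_\Psi}^{\dagger}f=\{\langle f,\widetilde\psi_i\rangle\}_{i\in I}\qquad(f\in\mathcal{H}_\Psi).$$ In particular, if $D_\Psi$ is closable, then $\overline{D_\Psi}^{\dagger}f=\{\langle f,\widetilde\psi_i\rangle\}_{i\in I}$.
   Context: $I$ is countable. $D_\Psi c=\sum_ic_i\psi_i$ on $\{c\in\ell^2:\sum_ic_i\psi_i\text{ converges in }\mathcal{H}\}$. $\mathcal{D}(C_\Psi)=\{f\in\mathcal{H}:\{\langle f,\psi_i\rangle\}_i\in\ell^2\}$, $\mathcal{H}_\Psi:=\overline{\mathcal{D}(C_\Psi)}$, $\pi_{\mathcal{H}_\Psi}$ the orthogonal projection onto $\mathcal{H}_\Psi$. $\Psi$ is a lower frame sequence if there is $A>0$ with $A\|f\|^2\le\sum_i|\langle f,\psi_i\rangle|^2$ for all $f\in\mathcal{D}(C_\Psi)$. $D^r_\Psi:\ell^2\supseteq\mathcal{D}(D^r_\Psi)\to\mathcal{H}_\Psi$, $D^r_\Psi c=\sum_ic_i\pi_{\mathcal{H}_\Psi}\psi_i$ on the set of $c\in\ell^2$ for which this converges; it is densely defined and closable with closure $\overline{D^r_\Psi}$. With $C^r_\Psi:\mathcal{D}(C_\Psi)\subseteq\mathcal{H}_\Psi\to\ell^2$,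 $C^r_\Psi f=\{\langle f,\psi_i\rangle\}$, the generalized frame operator is $\Gamma_\Psi=(C^r_\Psi)^*C^r_\Psi$ (bijective onto $\mathcal{H}_\Psi$ with bounded inverse when $\Psi$ is a lower frame sequence), and $\widetilde\psi_i:=\Gamma_\Psi^{-1}\pi_{\mathcal{H}_\Psi}\psi_i$. For a closed densely defined operator $T:\mathcal{D}(T)\subseteq\mathcal{K}_1\to\mathcal{K}_2$ the pseudo-inverse $T^\dagger$ is the unique operator from $\mathcal{K}_2$ to $\mathcal{K}_1$ with $\overline{\mathcal{R}(T^\dagger)}=\ker(T)^\perp$, $\ker(T^\dagger)=\mathcal{R}(T)^\perp$ and $TT^\dagger T=T$. *)

theory Defs
  imports "HOL-Analysis.Analysis"
begin

class complex_vector = real_vector +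
  fixes scaleC :: "complex \<Rightarrow> 'a \<Rightarrow> 'a"
  assumes scaleC_add_right: "scaleC a (x + y) = scaleC a x + scaleC a y"
    and scaleC_add_left: "scaleC (a + b) x = scaleC a x + scaleC b x"
    and scaleC_scaleC: "scaleC a (scaleC b x) = scaleC (a * b) x"
    and scaleC_one: "scaleC 1 x = x"
    and scaleR_scaleC: "scaleR r x = scaleC (complex_of_real r) x"

class complex_inner = complex_vector + real_normed_vector +
  fixes cinner :: "'a \<Rightarrow> 'a \<Rightarrow> complex"
  assumes cinner_commute: "cinner x y = cnj (cinner y x)"
    and cinner_add_left: "cinner (x + y) z = cinner x z + cinner y z"
    and cinner_scaleC_left: "cinner (scaleC r x) y = r * cinner x y"
    and cinner_self_real: "Im (cinner x x) = 0"
    and cinner_self_nonneg: "0 \<le> Re (cinner x x)"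
    and cinner_eq_zero_iff: "cinner x x = 0 \<longleftrightarrow> x = 0"
    and norm_eq_sqrt_cinner: "norm x = sqrt (Re (cinner x x))"

class chilbert = complex_inner + complete_space

definition ell2 :: "('i \<Rightarrow> complex) set" where
  "ell2 = {c. (\<lambda>i. (cmod (c i))\<^sup>2) summable_on UNIV}"

definition l2norm :: "('i \<Rightarrow> complex) \<Rightarrow> real" where
  "l2norm c = sqrt (\<Sum>\<^sub>\<infinity>i. (cmod (c i))\<^sup>2)"

definition l2inner :: "('i \<Rightarrow> complex) \<Rightarrow> ('i \<Rightarrow> complex) \<Rightarrow> complex" where
  "l2inner c d = (\<Sum>\<^sub>\<infinity>i. c i * cnj (d i))"

definition l2_lim :: "(nat \<Rightarrow> 'i \<Rightarrow> complex) \<Rightarrow> ('i \<Rightarrow> complex) \<Rightarrow> bool" where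
  "l2_lim x c \<longleftrightarrow> c \<in> ell2 \<and> (\<forall>n. x n \<in> ell2) \<and> (\<lambda>n. l2norm (\<lambda>i. x n i - c i)) \<longlonglongrightarrow> 0"

definition l2closure :: "('i \<Rightarrow> complex) set \<Rightarrow> ('i \<Rightarrow> complex) set" where
  "l2closure A = {c. \<exists>x. (\<forall>n. x n \<in> A) \<and> l2_lim x c}"

section \<open>Operators ell^2 \<supseteq> D \<rightarrow> H, given by a domain D and a map T\<close>

definition graph_closure ::
  "('i \<Rightarrow> complex) set \<Rightarrow> (('i \<Rightarrow> complex) \<Rightarrow> 'h::chilbert) \<Rightarrow> (('i \<Rightarrow> complex) \<times> 'h) set" where
  "graph_closure D T = {(c, f). \<exists>x. (\<forall>n. x n \<in> D) \<and> l2_lim x c \<and> (\<lambda>n. T (x n)) \<longlonglongrightarrow> f}"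

definition closable :: "('i \<Rightarrow> complex) set \<Rightarrow> (('i \<Rightarrow> complex) \<Rightarrow> 'h::chilbert) \<Rightarrow> bool" where
  "closable D T \<longleftrightarrow> (\<forall>c f g. (c, f) \<in> graph_closure D T \<and> (c, g) \<in> graph_closure D T \<longrightarrow> f = g)"

definition op_closure_dom :: "('i \<Rightarrow> complex) set \<Rightarrow> (('i \<Rightarrow> complex) \<Rightarrow> 'h::chilbert) \<Rightarrow> ('i \<Rightarrow> complex) set" where
  "op_closure_dom D T = fst ` graph_closure D T"

definition op_closure_fun :: "('i \<Rightarrow> complex) set \<Rightarrow> (('i \<Rightarrow> complex) \<Rightarrow> 'h::chilbert) \<Rightarrow> ('i \<Rightarrow> complex) \<Rightarrow> 'h" where
  "op_closure_fun D T c = (THE f. (c, f) \<in> graph_closure D T)"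

text \<open>For an operator T with domain D \<subseteq> ell^2 and values in the Hilbert space K (a closed
  subspace of H), the operator S with domain E \<subseteq> K and values in ell^2 is a pseudo-inverse
  of T iff closure(R(S)) = ker(T)^\<bottom>, ker(S) = R(T)^\<bottom> (in K) and T S T = T.\<close>
definition is_pseudo_inverse ::
  "'h::chilbert set \<Rightarrow> ('i \<Rightarrow> complex) set \<Rightarrow> (('i \<Rightarrow> complex) \<Rightarrow> 'h) \<Rightarrow> 'h set \<Rightarrow> ('h \<Rightarrow> 'i \<Rightarrow> complex) \<Rightarrow> bool" where
  "is_pseudo_inverse K D T E S \<longleftrightarrow>
     E \<subseteq> K \<and> (\<forall>f\<in>E. S f \<in> ell2) \<and>
     l2closure (S ` E) = {c \<in> ell2. \<forall>d\<in>D. T d = 0 \<longrightarrow> l2inner c d = 0} \<and>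
     {f \<in> E. S f = (\<lambda>i. 0)} = {f \<in> K. \<forall>d\<in>D. cinner f (T d) = 0} \<and>
     (\<forall>d\<in>D. T d \<in> E \<and> S (T d) \<in> D \<and> T (S (T d)) = T d)"

definition analysis_dom :: "('i \<Rightarrow> 'h::chilbert) \<Rightarrow> 'h set" where
  "analysis_dom \<psi> = {f. (\<lambda>i. cinner f (\<psi> i)) \<in> ell2}"

definition H_Psi :: "('i \<Rightarrow> 'h::chilbert) \<Rightarrow> 'h set" where
  "H_Psi \<psi> = closure (analysis_dom \<psi>)"

definition lower_frame_sequence :: "('i \<Rightarrow> 'h::chilbert) \<Rightarrow> bool" where
  "lower_frame_sequence \<psi> \<longleftrightarrow>
     (\<exists>A>0. \<forall>f\<in>analysis_dom \<psi>. A * (norm f)\<^sup>2 \<le> (\<Sum>\<^sub>\<infinity>i. (cmod (cinner f (\<psi> i)))\<^sup>2))"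

definition orth_proj :: "'h::chilbert set \<Rightarrow> 'h \<Rightarrow> 'h" where
  "orth_proj M f = (THE g. g \<in> M \<and> (\<forall>m\<in>M. cinner (f - g) m = 0))"

definition synthesis_dom :: "('i \<Rightarrow> 'h::chilbert) \<Rightarrow> ('i \<Rightarrow> complex) set" where
  "synthesis_dom \<psi> = {c \<in> ell2. \<exists>s. ((\<lambda>i. scaleC (c i) (\<psi> i)) has_sum s) UNIV}"

definition synthesis :: "('i \<Rightarrow> 'h::chilbert) \<Rightarrow> ('i \<Rightarrow> complex) \<Rightarrow> 'h" where
  "synthesis \<psi> c = (\<Sum>\<^sub>\<infinity>i. scaleC (c i) (\<psi> i))"

definition red_synthesis_dom :: "('i \<Rightarrow> 'h::chilbert) \<Rightarrow> ('i \<Rightarrow> complex) set" where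
  "red_synthesis_dom \<psi> = synthesis_dom (\<lambda>i. orth_proj (H_Psi \<psi>) (\<psi> i))"

definition red_synthesis :: "('i \<Rightarrow> 'h::chilbert) \<Rightarrow> ('i \<Rightarrow> complex) \<Rightarrow> 'h" where
  "red_synthesis \<psi> = synthesis (\<lambda>i. orth_proj (H_Psi \<psi>) (\<psi> i))"

text \<open>Adjoint (C^r_\<Psi>)^* : ell^2 \<supseteq> dom \<rightarrow> H_\<Psi> of C^r_\<Psi> : D(C_\<Psi>) \<subseteq> H_\<Psi> \<rightarrow> ell^2.\<close>
definition analysis_adj_dom :: "('i \<Rightarrow> 'h::chilbert) \<Rightarrow> ('i \<Rightarrow> complex) set" where
  "analysis_adj_dom \<psi> = {c \<in> ell2. \<exists>g\<in>H_Psi \<psi>.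
      \<forall>f\<in>analysis_dom \<psi>. l2inner (\<lambda>i. cinner f (\<psi> i)) c = cinner f g}"

definition analysis_adj :: "('i \<Rightarrow> 'h::chilbert) \<Rightarrow> ('i \<Rightarrow> complex) \<Rightarrow> 'h" where
  "analysis_adj \<psi> c = (THE g. g \<in> H_Psi \<psi> \<and>
      (\<forall>f\<in>analysis_dom \<psi>. l2inner (\<lambda>i. cinner f (\<psi> i)) c = cinner f g))"

definition frame_op_dom :: "('i \<Rightarrow> 'h::chilbert) \<Rightarrow> 'h set" where
  "frame_op_dom \<psi> = {f \<in> analysis_dom \<psi>. (\<lambda>i. cinner f (\<psi> i)) \<in> analysis_adj_dom \<psi>}"

definition frame_op :: "('i \<Rightarrow> 'h::chilbert) \<Rightarrow> 'h \<Rightarrow> 'h" where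
  "frame_op \<psi> f = analysis_adj \<psi> (\<lambda>i. cinner f (\<psi> i))"

definition canonical_dual :: "('i \<Rightarrow> 'h::chilbert) \<Rightarrow> 'i \<Rightarrow> 'h" where
  "canonical_dual \<psi> i = (THE g. g \<in> frame_op_dom \<psi> \<and> frame_op \<psi> g = orth_proj (H_Psi \<psi>) (\<psi> i))"

end

theory Submission
  imports Defs
begin


lemma scaleC_zero_left[simp]: "scaleC 0 (x::'a::complex_vector) = 0"
  by (metis scaleR_scaleC scaleR_zero_left of_real_0)

lemma scaleC_minus1: "scaleC (-1) (x::'a::complex_vector) = - x"
  by (metis scaleR_scaleC scaleR_minus1_left of_real_1 of_real_minus)

lemma scaleC_zero_right[simp]: "scaleC a (0::'a::complex_vector) = 0"
  by (metis add_cancel_right_right add_0 scaleC_add_right)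

lemma scaleC_minus_left: "scaleC (-a) (x::'a::complex_vector) = - scaleC a x"
  by (metis scaleC_minus1 scaleC_scaleC mult_minus1)

lemma scaleC_minus_right: "scaleC a (- x::'a::complex_vector) = - scaleC a x"
  by (metis scaleC_minus1 scaleC_scaleC mult.commute)

lemma scaleC_diff_right: "scaleC a (x - y::'a::complex_vector) = scaleC a x - scaleC a y"
  by (metis diff_conv_add_uminus scaleC_add_right scaleC_minus_right)

lemma scaleC_diff_left: "scaleC (a - b) (x::'a::complex_vector) = scaleC a x - scaleC b x"
  by (metis diff_conv_add_uminus scaleC_add_left scaleC_minus_left)

lemma scaleC_of_real: "scaleC (complex_of_real r) (x::'a::complex_vector) = scaleR r x"
  by (simp add: scaleR_scaleC)

lemma re_help: "Re (complex_of_real p + - complex_of_real X + - complex_of_real X + complex_of_real Y * complex_of_real q) = p - 2*X + Y*q"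
  by simp

section \<open>Sesquilinear forms and Cauchy-Schwarz\<close>

locale sesq =
  fixes B :: "'a::complex_vector \<Rightarrow> 'a \<Rightarrow> complex"
  assumes add_left: "B (x + y) z = B x z + B y z"
    and scale_left: "B (scaleC r x) y = r * B x y"
    and commute: "B x y = cnj (B y x)"
    and pos: "0 \<le> Re (B x x)"
    and real: "Im (B x x) = 0"
begin

lemma add_right: "B x (y + z) = B x y + B x z"
  by (metis add_left commute complex_cnj_add)

lemma scale_right: "B x (scaleC r y) = cnj r * B x y"
  by (metis commute scale_left complex_cnj_mult)

lemma self_eq: "B x x = complex_of_real (Re (B x x))"
  using real by (simp add: complex_eq_iff)

lemma expand: "B (x + scaleC s y) (x + scaleC s y) = B x x + cnj s * B x y + s * B y x + s * cnj s * B y y"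
  by (simp add: add_left add_right scale_left scale_right algebra_simps)

lemma CS: "(cmod (B x y))\<^sup>2 \<le> Re (B x x) * Re (B y y)"
proof -
  define a where "a = B x y"
  define p where "p = Re (B x x)"
  define q where "q = Re (B y y)"
  have q0: "q \<ge> 0" using pos q_def by auto
  have p0: "p \<ge> 0" using pos p_def by auto
  have key: "0 \<le> p - 2*r*(cmod a)\<^sup>2 + r\<^sup>2 * (cmod a)\<^sup>2 * q" for r :: real
  proof -
    define s where "s = - (complex_of_real r * a)"
    have "0 \<le> Re (B (x + scaleC s y) (x + scaleC s y))" by (rule pos)
    also have "B (x + scaleC s y) (x + scaleC s y) = B x x + cnj s * a + s * cnj a + s * cnj s * B y y"
      unfolding expand a_def by (metis commute)
    also have "Re \<dots> = p - 2*r*(cmod a)\<^sup>2 + r\<^sup>2 * (cmod a)\<^sup>2 * q"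
    proof -
      have aa: "a * cnj a = complex_of_real ((cmod a)\<^sup>2)" by (metis complex_norm_square)
      have e1: "cnj s * a = - complex_of_real (r * (cmod a)\<^sup>2)"
      proof -
        have "cnj s * a = - (complex_of_real r * (a * cnj a))" by (simp add: s_def algebra_simps)
        then show ?thesis by (simp add: aa)
      qed
      have e2: "s * cnj a = - complex_of_real (r * (cmod a)\<^sup>2)"
      proof -
        have "s * cnj a = - (complex_of_real r * (a * cnj a))" by (simp add: s_def algebra_simps)
        then show ?thesis by (simp add: aa)
      qed
      have e3: "s * cnj s = complex_of_real (r\<^sup>2 * (cmod a)\<^sup>2)"
      proof -
        have "s * cnj s = complex_of_real r * complex_of_real r * (a * cnj a)"
          by (simp add: s_def algebra_simps)
        also have "a * cnj a = complex_of_real ((cmod a)\<^sup>2)" by (metis complex_norm_square)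
        finally show ?thesis by (simp add: power2_eq_square)
      qed
      have e4: "B y y = complex_of_real q" using self_eq q_def by simp
      have e5: "B x x = complex_of_real p" using self_eq p_def by simp
      have "Re (B x x + cnj s * a + s * cnj a + s * cnj s * B y y) =
          p - 2*(r*(cmod a)\<^sup>2) + (r\<^sup>2*(cmod a)\<^sup>2)*q"
        unfolding e1 e2 e3 e4 e5 by (rule re_help)
      then show ?thesis by (simp only: mult.assoc)
    qed
    finally show ?thesis .
  qed
  show ?thesis
  proof (cases "q = 0")
    case True
    have "a = 0"
    proof (rule ccontr)
      assume "a \<noteq> 0"
      then have c: "(cmod a)\<^sup>2 > 0" by simp
      have "0 \<le> p - 2*((p+1)/(2*(cmod a)\<^sup>2))*(cmod a)\<^sup>2"
        using key[of "(p+1)/(2*(cmod a)\<^sup>2)"] True by simp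
      also have "\<dots> = -1" using c by (simp add: field_simps)
      finally show False by simp
    qed
    then show ?thesis using p0 q0 a_def p_def q_def by simp
  next
    case False
    then have qp: "q > 0" using q0 by simp
    have "0 \<le> p - 2*(1/q)*(cmod a)\<^sup>2 + (1/q)\<^sup>2 * (cmod a)\<^sup>2 * q" by (rule key)
    also have "\<dots> = p - (cmod a)\<^sup>2 / q" using qp by (simp add: field_simps power2_eq_square)
    finally have "(cmod a)\<^sup>2 / q \<le> p" by simp
    then have "(cmod a)\<^sup>2 \<le> p * q" using qp by (simp add: field_simps)
    then show ?thesis using a_def p_def q_def by simp
  qed
qed

end

section \<open>Complex inner product spaces\<close>

interpretation cinner: sesq "cinner :: 'a::complex_inner \<Rightarrow> 'a \<Rightarrow> complex"
  by unfold_locales (auto intro: cinner_add_left cinner_scaleC_left cinner_commute cinner_self_nonneg cinner_self_real)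

lemma cinner_add_right: "cinner x (y + z) = cinner x y + cinner (x::'a::complex_inner) z"
  by (rule cinner.add_right)

lemma cinner_scaleC_right: "cinner x (scaleC r y) = cnj r * cinner (x::'a::complex_inner) y"
  by (rule cinner.scale_right)

lemma cinner_zero_left[simp]: "cinner 0 (x::'a::complex_inner) = 0"
  by (metis cinner_scaleC_left scaleC_zero_left mult_zero_left)

lemma cinner_zero_right[simp]: "cinner (x::'a::complex_inner) 0 = 0"
  by (metis cinner_commute cinner_zero_left complex_cnj_zero)

lemma cinner_minus_left: "cinner (- x) (y::'a::complex_inner) = - cinner x y"
  by (metis cinner_scaleC_left scaleC_minus1 mult_minus1)

lemma cinner_minus_right: "cinner x (- y::'a::complex_inner) = - cinner x y"
  by (metis cinner_commute cinner_minus_left complex_cnj_minus)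

lemma cinner_diff_left: "cinner (x - y) (z::'a::complex_inner) = cinner x z - cinner y z"
  by (simp only: diff_conv_add_uminus cinner_add_left cinner_minus_left)

lemma cinner_diff_right: "cinner x (y - z::'a::complex_inner) = cinner x y - cinner x z"
  by (simp only: diff_conv_add_uminus cinner_add_right cinner_minus_right)

lemma cinner_scaleR_left: "cinner (scaleR r x) (y::'a::complex_inner) = complex_of_real r * cinner x y"
  by (simp add: scaleR_scaleC cinner_scaleC_left)

lemma cinner_scaleR_right: "cinner x (scaleR r y::'a::complex_inner) = complex_of_real r * cinner x y"
  by (simp add: scaleR_scaleC cinner_scaleC_right)

lemma cinner_self_norm: "cinner x (x::'a::complex_inner) = complex_of_real ((norm x)\<^sup>2)"
proof -
  have "cinner x x = complex_of_real (Re (cinner x x))" by (rule cinner.self_eq)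
  moreover have "Re (cinner x x) = (norm x)\<^sup>2"
    using norm_eq_sqrt_cinner[of x] cinner_self_nonneg[of x] by simp
  ultimately show ?thesis by simp
qed

lemma Re_cinner_self: "Re (cinner x (x::'a::complex_inner)) = (norm x)\<^sup>2"
  by (simp add: cinner_self_norm)

lemma cinner_CS: "cmod (cinner x y) \<le> norm x * norm (y::'a::complex_inner)"
proof -
  have "(cmod (cinner x y))\<^sup>2 \<le> (norm x * norm y)\<^sup>2"
    using cinner.CS[of x y] by (simp add: Re_cinner_self power_mult_distrib)
  then show ?thesis by (rule power2_le_imp_le) simp
qed

lemma norm_scaleC: "norm (scaleC a x) = cmod a * norm (x::'a::complex_inner)"
proof -
  have "(norm (scaleC a x))\<^sup>2 = Re (cinner (scaleC a x) (scaleC a x))" by (simp add: Re_cinner_self)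
  also have "\<dots> = Re (a * cnj a * cinner x x)"
    by (simp add: cinner_scaleC_left cinner_scaleC_right mult.assoc mult.left_commute)
  also have "\<dots> = (cmod a * norm x)\<^sup>2"
    by (simp add: complex_norm_square[symmetric] cinner_self_norm power_mult_distrib del: of_real_power)
  finally show ?thesis by (simp add: power2_eq_iff_nonneg)
qed

lemma norm_add_sq: "(norm (x + y))\<^sup>2 = (norm x)\<^sup>2 + (norm y)\<^sup>2 + 2 * Re (cinner x (y::'a::complex_inner))"
proof -
  have "(norm (x + y))\<^sup>2 = Re (cinner (x+y) (x+y))" by (simp add: Re_cinner_self)
  also have "\<dots> = Re (cinner x x) + Re (cinner y y) + Re (cinner x y) + Re (cinner y x)"
    by (simp add: cinner_add_left cinner_add_right)
  also have "Re (cinner y x) = Re (cinner x y)" by (subst cinner_commute) simp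
  finally show ?thesis by (simp add: Re_cinner_self)
qed

lemma norm_diff_sq: "(norm (x - y))\<^sup>2 = (norm x)\<^sup>2 + (norm y)\<^sup>2 - 2 * Re (cinner x (y::'a::complex_inner))"
  using norm_add_sq[of x "-y"] by (simp add: cinner_minus_right)

lemma bounded_bilinear_cinner: "bounded_bilinear (cinner :: 'a::complex_inner \<Rightarrow> 'a \<Rightarrow> complex)"
proof
  fix a a' b b' :: 'a and r :: real
  show "cinner (a + a') b = cinner a b + cinner a' b" by (rule cinner_add_left)
  show "cinner a (b + b') = cinner a b + cinner a b'" by (rule cinner_add_right)
  show "cinner (scaleR r a) b = scaleR r (cinner a b)" by (simp add: cinner_scaleR_left scaleR_conv_of_real)
  show "cinner a (scaleR r b) = scaleR r (cinner a b)" by (simp add: cinner_scaleR_right scaleR_conv_of_real)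
next
  show "\<exists>K. \<forall>a b::'a. norm (cinner a b) \<le> norm a * norm b * K"
    by (rule exI[of _ 1]) (simp add: cinner_CS)
qed

lemma tendsto_cinner[tendsto_intros]:
  "(f \<longlongrightarrow> a) F \<Longrightarrow> (g \<longlongrightarrow> b) F \<Longrightarrow> ((\<lambda>x. cinner (f x) (g x :: 'a::complex_inner)) \<longlongrightarrow> cinner a b) F"
  by (rule bounded_bilinear.tendsto[OF bounded_bilinear_cinner])

lemma bounded_linear_cinner_left: "bounded_linear (\<lambda>x. cinner x (y::'a::complex_inner))"
  by (rule bounded_bilinear.bounded_linear_left[OF bounded_bilinear_cinner])

lemma bounded_linear_scaleC: "bounded_linear (scaleC a :: 'a::complex_inner \<Rightarrow> 'a)"
proof
  fix x y :: 'a and r :: real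
  show "scaleC a (x + y) = scaleC a x + scaleC a y" by (rule scaleC_add_right)
  show "scaleC a (scaleR r x) = scaleR r (scaleC a x)"
    by (simp add: scaleR_scaleC scaleC_scaleC mult.commute)
  show "\<exists>K. \<forall>x::'a. norm (scaleC a x) \<le> norm x * K"
    by (rule exI[of _ "cmod a"]) (simp add: norm_scaleC mult.commute)
qed

lemma tendsto_scaleC_const[tendsto_intros]:
  "(f \<longlongrightarrow> x) F \<Longrightarrow> ((\<lambda>n. scaleC a (f n :: 'a::complex_inner)) \<longlongrightarrow> scaleC a x) F"
  by (rule bounded_linear.tendsto[OF bounded_linear_scaleC])

lemma cinner_eq_zero_self: "cinner x (x::'a::complex_inner) = 0 \<Longrightarrow> x = 0"
  using cinner_eq_zero_iff by blast

definition csubspace :: "'a::complex_vector set \<Rightarrow> bool" where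
  "csubspace M \<longleftrightarrow> 0 \<in> M \<and> (\<forall>x\<in>M. \<forall>y\<in>M. x + y \<in> M) \<and> (\<forall>a. \<forall>x\<in>M. scaleC a x \<in> M)"

lemma csubspace_0: "csubspace M \<Longrightarrow> 0 \<in> M"
  and csubspace_add: "csubspace M \<Longrightarrow> x \<in> M \<Longrightarrow> y \<in> M \<Longrightarrow> x + y \<in> M"
  and csubspace_scale: "csubspace M \<Longrightarrow> x \<in> M \<Longrightarrow> scaleC a x \<in> M"
  by (auto simp: csubspace_def)

lemma csubspace_minus: "csubspace M \<Longrightarrow> x \<in> M \<Longrightarrow> - x \<in> M"
  by (metis csubspace_scale scaleC_minus1)

lemma csubspace_diff: "csubspace M \<Longrightarrow> x \<in> M \<Longrightarrow> y \<in> M \<Longrightarrow> x - y \<in> M"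
  by (metis csubspace_add csubspace_minus diff_conv_add_uminus)

lemma csubspace_scaleR: "csubspace M \<Longrightarrow> x \<in> M \<Longrightarrow> scaleR r x \<in> M"
  by (metis csubspace_scale scaleC_of_real)

lemma csubspace_closure:
  fixes M :: "'a::complex_inner set"
  assumes "csubspace M" shows "csubspace (closure M)"
  unfolding csubspace_def
proof (intro conjI ballI allI)
  show "0 \<in> closure M" using assms csubspace_0 closure_subset by blast
next
  fix x y assume "x \<in> closure M" "y \<in> closure M"
  then obtain X Y where X: "\<forall>n. X n \<in> M" "X \<longlonglongrightarrow> x" and Y: "\<forall>n. Y n \<in> M" "Y \<longlonglongrightarrow> y"
    by (meson closure_sequential)
  have "\<forall>n. X n + Y n \<in> M" using X Y assms csubspace_add by blast
  moreover have "(\<lambda>n. X n + Y n) \<longlonglongrightarrow> x + y" using X Y by (intro tendsto_intros)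
  ultimately show "x + y \<in> closure M" by (meson closure_sequential)
next
  fix a x assume "x \<in> closure M"
  then obtain X where X: "\<forall>n. X n \<in> M" "X \<longlonglongrightarrow> x" by (meson closure_sequential)
  have "\<forall>n. scaleC a (X n) \<in> M" using X assms csubspace_scale by blast
  moreover have "(\<lambda>n. scaleC a (X n)) \<longlonglongrightarrow> scaleC a x" using X by (intro tendsto_intros)
  ultimately show "scaleC a x \<in> closure M" by (meson closure_sequential)
qed

lemma orth_closure:
  fixes v :: "'a::complex_inner"
  assumes "x \<in> closure S" "\<And>s. s \<in> S \<Longrightarrow> cinner s v = 0"
  shows "cinner x v = 0"
proof -
  obtain X where X: "\<forall>n. X n \<in> S" "X \<longlonglongrightarrow> x" using assms(1) by (meson closure_sequential)
  have "(\<lambda>n. cinner (X n) v) \<longlonglongrightarrow> cinner x v" using X by (intro tendsto_intros)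
  moreover have "(\<lambda>n. cinner (X n) v) = (\<lambda>n. 0)" using X assms(2) by auto
  ultimately show ?thesis by (metis LIMSEQ_const_iff)
qed


lemma cplx_var_help:
  fixes c l :: complex and r :: real
  defines "w \<equiv> l - cnj c"
  defines "t \<equiv> complex_of_real r * cnj w"
  shows "2 * Re (cnj t * c) - 2 * Re (t * l) = - 2 * r * (cmod w)\<^sup>2"
    and "(cmod t)\<^sup>2 = r\<^sup>2 * (cmod w)\<^sup>2"
proof -
  show "(cmod t)\<^sup>2 = r\<^sup>2 * (cmod w)\<^sup>2"
    by (simp add: t_def norm_mult power_mult_distrib)
  have "Re (cnj t * c) = Re (t * cnj c)"
    by simp
  then have "2 * Re (cnj t * c) - 2 * Re (t * l) = - 2 * Re (t * w)"
    by (simp add: w_def right_diff_distrib)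
  also have "t * w = complex_of_real r * (w * cnj w)" by (simp add: t_def mult.commute mult.left_commute)
  also have "w * cnj w = complex_of_real ((cmod w)\<^sup>2)" by (metis complex_norm_square)
  finally show "2 * Re (cnj t * c) - 2 * Re (t * l) = - 2 * r * (cmod w)\<^sup>2"
    by (simp del: of_real_power)
qed

lemma riesz_sub:
  fixes M :: "'a::chilbert set" and L :: "'a \<Rightarrow> complex"
  assumes M: "csubspace M" "closed M"
    and Ladd: "\<And>x y. x \<in> M \<Longrightarrow> y \<in> M \<Longrightarrow> L (x + y) = L x + L y"
    and Lscale: "\<And>a x. x \<in> M \<Longrightarrow> L (scaleC a x) = a * L x"
    and Lbd: "\<And>x. x \<in> M \<Longrightarrow> cmod (L x) \<le> K * norm x"
  shows "\<exists>y\<in>M. \<forall>x\<in>M. L x = cinner x y"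
proof -
  define J where "J x = (norm x)\<^sup>2 - 2 * Re (L x)" for x
  have Jlow: "- (K\<^sup>2) \<le> J x" if "x \<in> M" for x
  proof -
    have "Re (L x) \<le> cmod (L x)" by (rule complex_Re_le_cmod)
    also have "\<dots> \<le> K * norm x" using Lbd that by blast
    also have "\<dots> \<le> \<bar>K\<bar> * norm x" by (simp add: mult_right_mono)
    finally have "Re (L x) \<le> \<bar>K\<bar> * norm x" .
    moreover have "0 \<le> (norm x - \<bar>K\<bar>)\<^sup>2" by simp
    moreover have "(norm x - \<bar>K\<bar>)\<^sup>2 = (norm x)\<^sup>2 - 2 * (\<bar>K\<bar> * norm x) + K\<^sup>2"
      by (simp add: power2_eq_square algebra_simps)
    ultimately show ?thesis unfolding J_def by linarith
  qed
  have M0: "0 \<in> M" using M csubspace_0 by blast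
  have bdd: "bdd_below (J ` M)" using Jlow by (auto intro!: bdd_belowI[of _ "- (K\<^sup>2)"])
  define m where "m = Inf (J ` M)"
  have mle: "m \<le> J x" if "x \<in> M" for x
    unfolding m_def using bdd that by (simp add: cInf_lower)
  have "\<exists>x\<in>M. J x < m + inverse (real (Suc n))" for n
  proof -
    have "Inf (J ` M) < m + inverse (real (Suc n))" unfolding m_def by simp
    then obtain z where "z \<in> J ` M" "z < m + inverse (real (Suc n))"
      using cInf_lessD[of "J ` M"] M0 by blast
    then show ?thesis by blast
  qed
  then obtain X where X: "\<And>n. X n \<in> M" "\<And>n. J (X n) < m + inverse (real (Suc n))"
    by metis
  have para: "(norm (X n - X k))\<^sup>2 \<le> 2 * inverse (real (Suc n)) + 2 * inverse (real (Suc k))" for n k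
  proof -
    define u v where "u = X n" and "v = X k"
    define w where "w = scaleR (1/2) (u + v)"
    have uM: "u \<in> M" and vM: "v \<in> M" using X u_def v_def by auto
    have wM: "w \<in> M" unfolding w_def using uM vM M csubspace_add csubspace_scaleR by blast
    have Jw: "m \<le> J w" using mle wM by blast
    have nw: "(norm w)\<^sup>2 = (norm (u + v))\<^sup>2 / 4"
      by (simp add: w_def power_mult_distrib power_divide)
    have Lw: "L w = (L u + L v) / 2"
    proof -
      have "L w = complex_of_real (1/2) * L (u + v)"
        unfolding w_def scaleC_of_real[symmetric] using Lscale uM vM M csubspace_add by blast
      then show ?thesis using Ladd uM vM by simp
    qed
    have pl: "(norm (u - v))\<^sup>2 + (norm (u + v))\<^sup>2 = 2 * (norm u)\<^sup>2 + 2 * (norm v)\<^sup>2"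
      using norm_add_sq[of u v] norm_diff_sq[of u v] by simp
    have "(norm (u - v))\<^sup>2 = 2 * J u + 2 * J v - 4 * J w"
    proof -
      have "Re (L w) = Re ((L u + L v) / 2)" by (simp only: Lw)
      then have "Re (L w) = (Re (L u) + Re (L v)) / 2" by simp
      then show ?thesis using pl nw unfolding J_def by (simp add: field_simps)
    qed
    also have "\<dots> \<le> 2 * inverse (real (Suc n)) + 2 * inverse (real (Suc k))"
      using X(2)[of n] X(2)[of k] Jw u_def v_def by simp
    finally show ?thesis using u_def v_def by simp
  qed
  have "Cauchy X"
  proof (rule metric_CauchyI)
    fix e :: real assume e: "0 < e"
    obtain N :: nat where N: "4 / e\<^sup>2 < real N" using reals_Archimedean2 by blast
    have "\<forall>n\<ge>N. \<forall>k\<ge>N. dist (X n) (X k) < e"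
    proof (intro allI impI)
      fix n k assume nk: "N \<le> n" "N \<le> k"
      have e2: "0 < e\<^sup>2" using e by simp
      have Npos: "0 < real N" using N e2 by (smt (verit) divide_pos_pos)
      have i1: "inverse (real (Suc n)) \<le> inverse (real N)"
        using nk Npos by (simp add: le_imp_inverse_le)
      have i2: "inverse (real (Suc k)) \<le> inverse (real N)"
        using nk Npos by (simp add: le_imp_inverse_le)
      have "4 * inverse (real N) < e\<^sup>2"
        using N Npos e2 by (simp add: field_simps)
      then have "(norm (X n - X k))\<^sup>2 < e\<^sup>2" using para[of n k] i1 i2 by linarith
      then have "norm (X n - X k) < e" using e by (simp add: power_less_imp_less_base)
      then show "dist (X n) (X k) < e" by (simp add: dist_norm)
    qed
    then show "\<exists>N. \<forall>n\<ge>N. \<forall>k\<ge>N. dist (X n) (X k) < e" by blast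
  qed
  then obtain y where y: "X \<longlonglongrightarrow> y" using Cauchy_convergent convergent_def by blast
  have yM: "y \<in> M" using closed_sequentially[OF M(2)] X(1) y by blast
  have LX: "(\<lambda>n. L (X n)) \<longlonglongrightarrow> L y"
  proof -
    have "(\<lambda>n. L (X n) - L y) \<longlonglongrightarrow> 0"
    proof (rule Lim_null_comparison)
      show "\<forall>\<^sub>F n in sequentially. norm (L (X n) - L y) \<le> \<bar>K\<bar> * norm (X n - y)"
      proof (rule always_eventually, rule allI)
        fix n
        have d: "X n - y \<in> M" using X(1) yM M csubspace_diff by blast
        have "L (X n) = L ((X n - y) + y)" by simp
        also have "\<dots> = L (X n - y) + L y" using Ladd d yM by blast
        finally have "L (X n) - L y = L (X n - y)" by simp
        then have "norm (L (X n) - L y) = cmod (L (X n - y))" by simp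
        also have "\<dots> \<le> K * norm (X n - y)" using Lbd d by blast
        also have "\<dots> \<le> \<bar>K\<bar> * norm (X n - y)" by (simp add: mult_right_mono)
        finally show "norm (L (X n) - L y) \<le> \<bar>K\<bar> * norm (X n - y)" .
      qed
      have "(\<lambda>n. norm (X n - y)) \<longlonglongrightarrow> 0" using y by (simp add: tendsto_norm_zero LIM_zero)
      then show "(\<lambda>n. \<bar>K\<bar> * norm (X n - y)) \<longlonglongrightarrow> 0" by (simp add: tendsto_mult_right_zero)
    qed
    then show ?thesis by (rule LIM_zero_cancel)
  qed
  have JX: "(\<lambda>n. J (X n)) \<longlonglongrightarrow> J y"
    unfolding J_def by (intro tendsto_intros y LX)
  have "(\<lambda>n. m + inverse (real (Suc n))) \<longlonglongrightarrow> m + 0"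
    by (intro tendsto_intros LIMSEQ_inverse_real_of_nat)
  then have "J y \<le> m"
    using JX X(2) by (intro LIMSEQ_le[OF JX]) (auto intro: less_imp_le)
  then have ymin: "J y \<le> J x" if "x \<in> M" for x using mle that by fastforce
  have "L x = cinner x y" if xM: "x \<in> M" for x
  proof -
    define w where "w = L x - cnj (cinner y x)"
    have wr: "(cmod w)\<^sup>2 \<le> 0"
    proof -
      define r :: real where "r = 1 / ((norm x)\<^sup>2 + 1)"
      have r0: "0 < r" unfolding r_def by (simp add: add_nonneg_pos)
      define t where "t = complex_of_real r * cnj w"
      define z where "z = y + scaleC t x"
      have zM: "z \<in> M" unfolding z_def using xM yM M csubspace_add csubspace_scale by blast
      have nz: "(norm z)\<^sup>2 = (norm y)\<^sup>2 + (cmod t)\<^sup>2 * (norm x)\<^sup>2 + 2 * Re (cnj t * cinner y x)"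
        unfolding z_def norm_add_sq by (simp add: norm_scaleC power_mult_distrib cinner_scaleC_right)
      have Lz: "L z = L y + t * L x"
      proof -
        have "scaleC t x \<in> M" using xM M csubspace_scale by blast
        then have "L z = L y + L (scaleC t x)" unfolding z_def using Ladd yM by blast
        then show ?thesis using Lscale xM by simp
      qed
      have h: "2 * Re (cnj t * cinner y x) - 2 * Re (t * L x) = - 2 * r * (cmod w)\<^sup>2"
        "(cmod t)\<^sup>2 = r\<^sup>2 * (cmod w)\<^sup>2"
        using cplx_var_help[where c = "cinner y x" and l = "L x" and r = r] unfolding w_def t_def by auto
      have "J y \<le> J z" using ymin zM by blast
      then have "0 \<le> (cmod t)\<^sup>2 * (norm x)\<^sup>2 + 2 * Re (cnj t * cinner y x) - 2 * Re (t * L x)"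
        unfolding J_def nz Lz by simp
      then have A: "0 \<le> r\<^sup>2 * (cmod w)\<^sup>2 * (norm x)\<^sup>2 - 2 * r * (cmod w)\<^sup>2" using h by simp
      have "r * (norm x)\<^sup>2 \<le> 1" unfolding r_def by (simp add: add_nonneg_pos divide_le_eq)
      then have "r * (cmod w)\<^sup>2 * (norm x)\<^sup>2 \<le> (cmod w)\<^sup>2"
        by (metis mult.commute mult.left_commute mult_left_le zero_le_power2)
      moreover have "2 * (cmod w)\<^sup>2 \<le> r * (cmod w)\<^sup>2 * (norm x)\<^sup>2"
      proof -
        have "r * (2 * (cmod w)\<^sup>2) \<le> r * (r * (cmod w)\<^sup>2 * (norm x)\<^sup>2)"
          using A by (simp add: power2_eq_square algebra_simps)
        then show ?thesis using r0 by simp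
      qed
      ultimately show ?thesis by linarith
    qed
    then have "w = 0" by simp
    then show ?thesis unfolding w_def by (metis cinner_commute eq_iff_diff_eq_0)
  qed
  then show ?thesis using yM by blast
qed

section \<open>Orthogonal projection\<close>

lemma proj_exists:
  fixes M :: "'a::chilbert set"
  assumes "csubspace M" "closed M"
  shows "\<exists>g\<in>M. \<forall>m\<in>M. cinner (f - g) m = 0"
proof -
  have "\<exists>y\<in>M. \<forall>x\<in>M. cinner x f = cinner x y"
    by (rule riesz_sub[OF assms, where K = "norm f"])
       (auto simp: cinner_add_left cinner_scaleC_left, metis cinner_CS mult.commute)
  then obtain g where g: "g \<in> M" "\<forall>x\<in>M. cinner x f = cinner x g" by blast
  have "cinner (f - g) m = 0" if "m \<in> M" for m
  proof -
    have "cinner m (f - g) = 0" using g that by (simp add: cinner_diff_right)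
    then show ?thesis by (metis cinner_commute complex_cnj_zero)
  qed
  then show ?thesis using g by blast
qed

lemma proj_unique:
  fixes M :: "'a::chilbert set"
  assumes "csubspace M" "g \<in> M" "\<forall>m\<in>M. cinner (f - g) m = 0"
    "g' \<in> M" "\<forall>m\<in>M. cinner (f - g') m = 0"
  shows "g = g'"
proof -
  have d: "g' - g \<in> M" using assms csubspace_diff by blast
  have "cinner (g' - g) (g' - g) = cinner (f - g) (g' - g) - cinner (f - g') (g' - g)"
    by (simp add: cinner_diff_left)
  also have "\<dots> = 0" using assms d by simp
  finally show ?thesis using cinner_eq_zero_self by fastforce
qed

lemma orth_proj:
  fixes M :: "'a::chilbert set"
  assumes "csubspace M" "closed M"
  shows "orth_proj M f \<in> M" "\<And>m. m \<in> M \<Longrightarrow> cinner (f - orth_proj M f) m = 0"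
proof -
  have ex: "\<exists>!g. g \<in> M \<and> (\<forall>m\<in>M. cinner (f - g) m = 0)"
    using proj_exists[OF assms] proj_unique[OF assms(1)] by blast
  have "orth_proj M f \<in> M \<and> (\<forall>m\<in>M. cinner (f - orth_proj M f) m = 0)"
    unfolding orth_proj_def by (rule theI'[OF ex])
  then show "orth_proj M f \<in> M" "\<And>m. m \<in> M \<Longrightarrow> cinner (f - orth_proj M f) m = 0" by auto
qed

lemma orth_proj_eq:
  fixes M :: "'a::chilbert set"
  assumes "csubspace M" "closed M" "g \<in> M" "\<forall>m\<in>M. cinner (f - g) m = 0"
  shows "orth_proj M f = g"
  using proj_unique[of M "orth_proj M f" f g] orth_proj[OF assms(1,2)] assms by blast


lemma sq_sum_le: "(a + b)\<^sup>2 \<le> 2 * a\<^sup>2 + 2 * (b::real)\<^sup>2"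
proof -
  have "0 \<le> (a - b)\<^sup>2" by simp
  then show ?thesis unfolding power2_sum power2_diff by linarith
qed

lemma prod_le_sq_sum: "0 \<le> a \<Longrightarrow> 0 \<le> b \<Longrightarrow> a * b \<le> a\<^sup>2 + (b::real)\<^sup>2"
proof -
  assume "0 \<le> a" "0 \<le> b"
  then have "0 \<le> a * b" by simp
  moreover have "0 \<le> (a - b)\<^sup>2" by simp
  ultimately show ?thesis unfolding power2_diff by linarith
qed

lemma ell2_iff: "c \<in> ell2 \<longleftrightarrow> (\<lambda>i. (cmod (c i))\<^sup>2) summable_on UNIV"
  by (simp add: ell2_def)

lemma ell2_zero[simp]: "(\<lambda>i. 0) \<in> ell2"
  by (simp add: ell2_def)

lemma ell2_scale: "c \<in> ell2 \<Longrightarrow> (\<lambda>i. a * c i) \<in> ell2"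
  unfolding ell2_iff by (simp add: norm_mult power_mult_distrib summable_on_cmult_right)

lemma ell2_add:
  assumes "c \<in> ell2" "d \<in> ell2" shows "(\<lambda>i. c i + d i) \<in> ell2"
proof -
  have s: "(\<lambda>i. 2 * (cmod (c i))\<^sup>2 + 2 * (cmod (d i))\<^sup>2) summable_on UNIV"
    using assms unfolding ell2_iff by (intro summable_on_add summable_on_cmult_right)
  have "(cmod (c i + d i))\<^sup>2 \<le> 2 * (cmod (c i))\<^sup>2 + 2 * (cmod (d i))\<^sup>2" for i
  proof -
    have "cmod (c i + d i) \<le> cmod (c i) + cmod (d i)" by (rule norm_triangle_ineq)
    then have "(cmod (c i + d i))\<^sup>2 \<le> (cmod (c i) + cmod (d i))\<^sup>2" by (simp add: power_mono)
    also have "\<dots> \<le> 2 * (cmod (c i))\<^sup>2 + 2 * (cmod (d i))\<^sup>2"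
      by (rule sq_sum_le)
    finally show ?thesis .
  qed
  then show ?thesis unfolding ell2_iff
    by (intro summable_on_comparison_test[OF s]) auto
qed

lemma ell2_uminus: "c \<in> ell2 \<Longrightarrow> (\<lambda>i. - c i) \<in> ell2"
  by (simp add: ell2_def)

lemma ell2_diff: "c \<in> ell2 \<Longrightarrow> d \<in> ell2 \<Longrightarrow> (\<lambda>i. c i - d i) \<in> ell2"
  using ell2_add[of c "\<lambda>i. - d i"] ell2_uminus[of d] by simp

lemma ell2_prod_summable:
  assumes "c \<in> ell2" "d \<in> ell2" shows "(\<lambda>i. c i * cnj (d i)) summable_on UNIV"
proof -
  have s: "(\<lambda>i. (cmod (c i))\<^sup>2 + (cmod (d i))\<^sup>2) summable_on UNIV"
    using assms unfolding ell2_iff by (intro summable_on_add)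
  have "norm (c i * cnj (d i)) \<le> (cmod (c i))\<^sup>2 + (cmod (d i))\<^sup>2" for i
  proof -
    have "norm (c i * cnj (d i)) = cmod (c i) * cmod (d i)" by (simp add: norm_mult)
    also have "\<dots> \<le> (cmod (c i))\<^sup>2 + (cmod (d i))\<^sup>2"
      by (rule prod_le_sq_sum) simp_all
    finally show ?thesis .
  qed
  then have "(\<lambda>i. norm (c i * cnj (d i))) summable_on UNIV"
    by (intro summable_on_comparison_test[OF s]) auto
  then show ?thesis by (rule abs_summable_summable)
qed

lemma l2inner_self:
  assumes "c \<in> ell2" shows "l2inner c c = complex_of_real (\<Sum>\<^sub>\<infinity>i. (cmod (c i))\<^sup>2)"
proof -
  have "l2inner c c = (\<Sum>\<^sub>\<infinity>i. complex_of_real ((cmod (c i))\<^sup>2))"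
    unfolding l2inner_def by (simp add: complex_norm_square del: of_real_power)
  also have "\<dots> = complex_of_real (\<Sum>\<^sub>\<infinity>i. (cmod (c i))\<^sup>2)"
    using assms unfolding ell2_iff by (intro infsumI has_sum_of_real) simp
  finally show ?thesis .
qed

lemma l2sum_nonneg: "0 \<le> (\<Sum>\<^sub>\<infinity>i. (cmod (c i))\<^sup>2)"
  by (intro infsum_nonneg) simp

section \<open>The type of ell2 sequences\<close>

typedef 'i l2 = "ell2 :: ('i \<Rightarrow> complex) set"
  morphisms coef mkl2
  by (rule exI[of _ "\<lambda>i. 0"]) simp

setup_lifting type_definition_l2

instantiation l2 :: (type) complex_vector
begin

lift_definition zero_l2 :: "'i l2" is "\<lambda>i. 0" by simp
lift_definition plus_l2 :: "'i l2 \<Rightarrow> 'i l2 \<Rightarrow> 'i l2" is "\<lambda>c d i. c i + d i" by (rule ell2_add)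
lift_definition uminus_l2 :: "'i l2 \<Rightarrow> 'i l2" is "\<lambda>c i. - c i" by (rule ell2_uminus)
lift_definition minus_l2 :: "'i l2 \<Rightarrow> 'i l2 \<Rightarrow> 'i l2" is "\<lambda>c d i. c i - d i" by (rule ell2_diff)
lift_definition scaleR_l2 :: "real \<Rightarrow> 'i l2 \<Rightarrow> 'i l2" is "\<lambda>r c i. complex_of_real r * c i"
  by (rule ell2_scale)
lift_definition scaleC_l2 :: "complex \<Rightarrow> 'i l2 \<Rightarrow> 'i l2" is "\<lambda>a c i. a * c i"
  by (rule ell2_scale)

instance
  by standard (transfer; simp add: fun_eq_iff algebra_simps)+

end

lift_definition l2c :: "'i l2 \<Rightarrow> 'i l2 \<Rightarrow> complex" is l2inner .

lemma l2c_self: "l2c x x = complex_of_real (\<Sum>\<^sub>\<infinity>i. (cmod (coef x i))\<^sup>2)"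
  by transfer (rule l2inner_self)

interpretation l2c: sesq "l2c :: 'i l2 \<Rightarrow> 'i l2 \<Rightarrow> complex"
proof
  fix x y z :: "'i l2" and r :: complex
  show "l2c (x + y) z = l2c x z + l2c y z"
    by transfer (simp add: l2inner_def distrib_right infsum_add ell2_prod_summable)
  show "l2c (scaleC r x) y = r * l2c x y"
    by transfer (simp add: l2inner_def mult.assoc infsum_cmult_right ell2_prod_summable)
  show "l2c x y = cnj (l2c y x)"
    by transfer (unfold l2inner_def, simp only: infsum_cnj[symmetric], simp add: mult.commute)
  show "0 \<le> Re (l2c x x)" by (simp add: l2c_self l2sum_nonneg)
  show "Im (l2c x x) = 0" by (simp add: l2c_self)
qed

definition l2n :: "'i l2 \<Rightarrow> real" where
  "l2n x = sqrt (Re (l2c x x))"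

lemma l2n_coef: "l2n x = l2norm (coef x)"
  by (simp add: l2n_def l2c_self l2norm_def)

lemma l2n_sq: "(l2n x)\<^sup>2 = Re (l2c x x)"
proof -
  have "0 \<le> Re (l2c x x)" by (rule l2c.pos)
  then show ?thesis by (simp add: l2n_def l2c.pos)
qed

lemma l2n_nonneg: "0 \<le> l2n x"
  by (simp add: l2n_def l2c.pos)

lemma l2n_zero_iff: "l2n x = 0 \<longleftrightarrow> x = 0"
proof
  assume "l2n x = 0"
  then have h: "(\<Sum>\<^sub>\<infinity>i. (cmod (coef x i))\<^sup>2) = 0"
    using l2n_coef[of x] l2sum_nonneg[of "coef x"] by (simp add: l2norm_def)
  have "coef x i = 0" for i
  proof -
    have s: "(\<lambda>i. (cmod (coef x i))\<^sup>2) summable_on UNIV" using coef[of x] by (simp add: ell2_def)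
    have hs: "((\<lambda>i. (cmod (coef x i))\<^sup>2) has_sum 0) UNIV" using s h by (metis has_sum_infsum)
    have "(\<lambda>i. (cmod (coef x i))\<^sup>2) i = 0"
      by (rule nonneg_has_sum_le_0D[OF hs]) simp_all
    then show ?thesis by simp
  qed
  then show "x = 0" by transfer (simp add: fun_eq_iff)
next
  assume "x = 0" then show "l2n x = 0" unfolding l2n_coef l2norm_def by transfer simp
qed

lemma l2n_triangle: "l2n (x + y) \<le> l2n x + l2n y"
proof -
  have cs: "cmod (l2c x y) \<le> l2n x * l2n y"
  proof -
    have "(cmod (l2c x y))\<^sup>2 \<le> (l2n x * l2n y)\<^sup>2"
      using l2c.CS[of x y] by (simp add: l2n_sq power_mult_distrib)
    then show ?thesis by (rule power2_le_imp_le) (simp add: l2n_nonneg)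
  qed
  have "(l2n (x + y))\<^sup>2 = (l2n x)\<^sup>2 + (l2n y)\<^sup>2 + Re (l2c x y) + Re (l2c y x)"
    by (simp add: l2n_sq l2c.add_left l2c.add_right)
  also have "Re (l2c y x) = Re (l2c x y)" by (subst l2c.commute) simp
  also have "Re (l2c x y) \<le> l2n x * l2n y" using cs complex_Re_le_cmod order_trans by blast
  then have "(l2n x)\<^sup>2 + (l2n y)\<^sup>2 + Re (l2c x y) + Re (l2c x y) \<le> (l2n x + l2n y)\<^sup>2"
    by (simp add: power2_eq_square algebra_simps)
  finally show ?thesis
    by (rule power2_le_imp_le) (simp add: l2n_nonneg add_nonneg_nonneg)
qed

lemma l2n_scaleC: "l2n (scaleC a x) = cmod a * l2n x"
proof -
  have "(l2n (scaleC a x))\<^sup>2 = Re (a * cnj a * l2c x x)"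
    by (simp only: l2n_sq l2c.scale_left l2c.scale_right mult.assoc mult.left_commute)
  also have "a * cnj a * l2c x x = complex_of_real ((cmod a)\<^sup>2 * (l2n x)\<^sup>2)"
  proof -
    have "l2c x x = complex_of_real ((l2n x)\<^sup>2)" using l2n_sq[of x] l2c.self_eq[of x] by simp
    moreover have "a * cnj a = complex_of_real ((cmod a)\<^sup>2)" by (metis complex_norm_square)
    ultimately show ?thesis by simp
  qed
  also have "Re (complex_of_real ((cmod a)\<^sup>2 * (l2n x)\<^sup>2)) = (cmod a * l2n x)\<^sup>2"
    by (simp add: power_mult_distrib)
  finally show ?thesis
    by (simp add: power2_eq_iff_nonneg l2n_nonneg)
qed

instantiation l2 :: (type) real_normed_vector
begin

definition norm_l2 :: "'i l2 \<Rightarrow> real" where "norm_l2 = l2n"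
definition dist_l2 :: "'i l2 \<Rightarrow> 'i l2 \<Rightarrow> real" where "dist_l2 x y = l2n (x - y)"
definition sgn_l2 :: "'i l2 \<Rightarrow> 'i l2" where "sgn_l2 x = scaleR (inverse (l2n x)) x"
definition uniformity_l2 :: "('i l2 \<times> 'i l2) filter" where
  "uniformity_l2 = (INF e\<in>{0 <..}. principal {(x, y). dist x y < e})"
definition open_l2 :: "'i l2 set \<Rightarrow> bool" where
  "open_l2 U = (\<forall>x\<in>U. \<forall>\<^sub>F (x', y) in uniformity. x' = x \<longrightarrow> y \<in> U)"

instance
proof
  fix x y z :: "'a l2" and r :: real
  show "dist x y = norm (x - y)" by (simp add: dist_l2_def norm_l2_def)
  show "sgn x = scaleR (inverse (norm x)) x" by (simp add: sgn_l2_def norm_l2_def)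
  show "norm x = 0 \<longleftrightarrow> x = 0" by (simp add: norm_l2_def l2n_zero_iff)
  show "norm (x + y) \<le> norm x + norm y" by (simp add: norm_l2_def l2n_triangle)
  show "norm (scaleR r x) = \<bar>r\<bar> * norm x"
    using l2n_scaleC[of "complex_of_real r" x] by (simp add: norm_l2_def scaleC_of_real)
qed (simp_all add: uniformity_l2_def open_l2_def)

end

instantiation l2 :: (type) complex_inner
begin

definition cinner_l2 :: "'i l2 \<Rightarrow> 'i l2 \<Rightarrow> complex" where "cinner_l2 = l2c"

instance
proof
  fix x y z :: "'a l2" and r :: complex
  show "cinner x y = cnj (cinner y x)" unfolding cinner_l2_def by (rule l2c.commute)
  show "cinner (x + y) z = cinner x z + cinner y z" unfolding cinner_l2_def by (rule l2c.add_left)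
  show "cinner (scaleC r x) y = r * cinner x y" unfolding cinner_l2_def by (rule l2c.scale_left)
  show "Im (cinner x x) = 0" unfolding cinner_l2_def by (rule l2c.real)
  show "0 \<le> Re (cinner x x)" unfolding cinner_l2_def by (rule l2c.pos)
  show "norm x = sqrt (Re (cinner x x))" unfolding cinner_l2_def norm_l2_def l2n_def ..
  show "cinner x x = 0 \<longleftrightarrow> x = 0"
    unfolding cinner_l2_def
    by (metis l2n_def l2n_zero_iff l2c.self_eq real_sqrt_eq_zero_cancel_iff of_real_0 zero_complex.simps(1))
qed

end


lemma coef_diff: "coef (x - y) = (\<lambda>i. coef x i - coef y i)"
  by (rule minus_l2.rep_eq)

lemma coef_add: "coef (x + y) = (\<lambda>i. coef x i + coef y i)"
  by (rule plus_l2.rep_eq)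

lemma coef_scaleC: "coef (scaleC a x) = (\<lambda>i. a * coef x i)"
  by (rule scaleC_l2.rep_eq)

lemma coef_zero: "coef 0 = (\<lambda>i. 0)"
  by (rule zero_l2.rep_eq)

lemma coef_ell2: "coef x \<in> ell2"
  by (rule coef)

lemma norm_l2_coef: "norm x = sqrt (\<Sum>\<^sub>\<infinity>i. (cmod (coef x i))\<^sup>2)"
  by (simp add: norm_l2_def l2n_coef l2norm_def)

lemma norm_l2_sq: "(norm x)\<^sup>2 = (\<Sum>\<^sub>\<infinity>i. (cmod (coef x i))\<^sup>2)"
  by (simp add: norm_l2_coef l2sum_nonneg)

lemma finite_sum_le_norm_l2:
  "finite F \<Longrightarrow> (\<Sum>i\<in>F. (cmod (coef x i))\<^sup>2) \<le> (norm x)\<^sup>2"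
  unfolding norm_l2_sq
  by (rule finite_sum_le_infsum) (use coef_ell2[of x] in \<open>auto simp: ell2_def\<close>)

lemma coef_le_norm: "cmod (coef x i) \<le> norm x"
proof -
  have "(cmod (coef x i))\<^sup>2 \<le> (norm x)\<^sup>2" using finite_sum_le_norm_l2[of "{i}" x] by simp
  then show ?thesis by (rule power2_le_imp_le) simp
qed

lemma cinner_l2_coef: "cinner x y = l2inner (coef x) (coef y)"
  by (simp add: cinner_l2_def l2c.rep_eq)

instance l2 :: (type) chilbert
proof
  fix X :: "nat \<Rightarrow> 'a l2"
  assume X: "Cauchy X"
  have "Cauchy (\<lambda>n. coef (X n) i)" for i
  proof (rule metric_CauchyI)
    fix e :: real assume "0 < e"
    then obtain N where N: "\<forall>m\<ge>N. \<forall>n\<ge>N. dist (X m) (X n) < e" using X metric_CauchyD by blast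
    have "dist (coef (X m) i) (coef (X n) i) < e" if "m \<ge> N" "n \<ge> N" for m n
    proof -
      have "dist (coef (X m) i) (coef (X n) i) = cmod (coef (X m - X n) i)"
        by (simp add: coef_diff dist_norm)
      also have "\<dots> \<le> norm (X m - X n)" by (rule coef_le_norm)
      also have "\<dots> < e" using N that by (simp add: dist_norm)
      finally show ?thesis .
    qed
    then show "\<exists>N. \<forall>m\<ge>N. \<forall>n\<ge>N. dist (coef (X m) i) (coef (X n) i) < e" by blast
  qed
  then have "\<forall>i. \<exists>l. (\<lambda>n. coef (X n) i) \<longlonglongrightarrow> l" using Cauchy_convergent_iff convergent_def by blast
  then obtain c where c: "\<And>i. (\<lambda>n. coef (X n) i) \<longlonglongrightarrow> c i" by metis
  have key: "\<exists>N. \<forall>n\<ge>N. (\<lambda>i. coef (X n) i - c i) \<in> ell2 \<and>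
      (\<Sum>\<^sub>\<infinity>i. (cmod (coef (X n) i - c i))\<^sup>2) \<le> e\<^sup>2" if e: "0 < e" for e
  proof -
    obtain N where N: "\<forall>m\<ge>N. \<forall>n\<ge>N. dist (X m) (X n) < e" using X metric_CauchyD e by blast
    have "(\<lambda>i. coef (X n) i - c i) \<in> ell2 \<and> (\<Sum>\<^sub>\<infinity>i. (cmod (coef (X n) i - c i))\<^sup>2) \<le> e\<^sup>2"
      if n: "n \<ge> N" for n
    proof -
      have fin: "(\<Sum>i\<in>F. (cmod (coef (X n) i - c i))\<^sup>2) \<le> e\<^sup>2" if F: "finite F" for F
      proof (rule LIMSEQ_le_const2)
        show "(\<lambda>m. \<Sum>i\<in>F. (cmod (coef (X n) i - coef (X m) i))\<^sup>2) \<longlonglongrightarrow> (\<Sum>i\<in>F. (cmod (coef (X n) i - c i))\<^sup>2)"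
          by (intro tendsto_intros c)
        show "\<exists>N'. \<forall>m\<ge>N'. (\<Sum>i\<in>F. (cmod (coef (X n) i - coef (X m) i))\<^sup>2) \<le> e\<^sup>2"
        proof (intro exI allI impI)
          fix m assume m: "N \<le> m"
          have "(\<Sum>i\<in>F. (cmod (coef (X n) i - coef (X m) i))\<^sup>2) = (\<Sum>i\<in>F. (cmod (coef (X n - X m) i))\<^sup>2)"
            by (simp add: coef_diff)
          also have "\<dots> \<le> (norm (X n - X m))\<^sup>2" using F by (rule finite_sum_le_norm_l2)
          also have "\<dots> \<le> e\<^sup>2"
            using N n m by (intro power_mono) (auto simp: dist_norm less_imp_le)
          finally show "(\<Sum>i\<in>F. (cmod (coef (X n) i - coef (X m) i))\<^sup>2) \<le> e\<^sup>2" .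
        qed
      qed
      have bdd: "bdd_above (sum (\<lambda>i. (cmod (coef (X n) i - c i))\<^sup>2) ` {F. F \<subseteq> UNIV \<and> finite F})"
        using fin by (auto intro!: bdd_aboveI[of _ "e\<^sup>2"])
      have sm: "(\<lambda>i. (cmod (coef (X n) i - c i))\<^sup>2) summable_on UNIV"
        by (rule nonneg_bdd_above_summable_on[OF _ bdd]) simp
      have "(\<Sum>\<^sub>\<infinity>i. (cmod (coef (X n) i - c i))\<^sup>2) \<le> e\<^sup>2"
        by (rule infsum_le_finite_sums[OF sm]) (use fin in auto)
      then show ?thesis using sm by (simp add: ell2_def)
    qed
    then show ?thesis by blast
  qed
  obtain N1 where N1: "(\<lambda>i. coef (X N1) i - c i) \<in> ell2" using key[of 1] by auto
  have "(\<lambda>i. coef (X N1) i - (coef (X N1) i - c i)) \<in> ell2"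
    using N1 coef_ell2 ell2_diff by blast
  then have cl: "c \<in> ell2" by simp
  have "X \<longlonglongrightarrow> mkl2 c"
  proof (rule metric_LIMSEQ_I)
    fix e :: real assume e: "0 < e"
    obtain N where N: "\<forall>n\<ge>N. (\<lambda>i. coef (X n) i - c i) \<in> ell2 \<and>
      (\<Sum>\<^sub>\<infinity>i. (cmod (coef (X n) i - c i))\<^sup>2) \<le> (e/2)\<^sup>2" using key[of "e/2"] e by auto
    have "dist (X n) (mkl2 c) < e" if "n \<ge> N" for n
    proof -
      have "(dist (X n) (mkl2 c))\<^sup>2 = (\<Sum>\<^sub>\<infinity>i. (cmod (coef (X n) i - c i))\<^sup>2)"
        by (simp add: dist_norm norm_l2_sq coef_diff mkl2_inverse cl)
      also have "\<dots> \<le> (e/2)\<^sup>2" using N that by blast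
      finally have "dist (X n) (mkl2 c) \<le> e/2" by (rule power2_le_imp_le) (use e in simp)
      then show ?thesis using e by simp
    qed
    then show "\<exists>N. \<forall>n\<ge>N. dist (X n) (mkl2 c) < e" by blast
  qed
  then show "convergent X" by (rule convergentI)
qed


section \<open>Products of Hilbert spaces\<close>

instantiation prod :: (complex_vector, complex_vector) complex_vector
begin

definition scaleC_prod :: "complex \<Rightarrow> 'a \<times> 'b \<Rightarrow> 'a \<times> 'b" where
  "scaleC_prod a x = (scaleC a (fst x), scaleC a (snd x))"

instance
proof
  fix a b :: complex and x y :: "'a \<times> 'b" and r :: real
  show "scaleC a (x + y) = scaleC a x + scaleC a y"
    by (simp add: scaleC_prod_def scaleC_add_right prod_eq_iff)
  show "scaleC (a + b) x = scaleC a x + scaleC b x"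
    by (simp add: scaleC_prod_def scaleC_add_left prod_eq_iff)
  show "scaleC a (scaleC b x) = scaleC (a * b) x"
    by (simp add: scaleC_prod_def scaleC_scaleC prod_eq_iff)
  show "scaleC 1 x = x"
    by (simp add: scaleC_prod_def scaleC_one prod_eq_iff)
  show "scaleR r x = scaleC (complex_of_real r) x"
    by (simp add: scaleC_prod_def scaleR_scaleC prod_eq_iff)
qed

end

lemma scaleC_Pair[simp]: "scaleC a (x, y) = (scaleC a x, scaleC a y)"
  by (simp add: scaleC_prod_def)

instantiation prod :: (complex_inner, complex_inner) complex_inner
begin

definition cinner_prod :: "'a \<times> 'b \<Rightarrow> 'a \<times> 'b \<Rightarrow> complex" where
  "cinner_prod x y = cinner (fst x) (fst y) + cinner (snd x) (snd y)"

instance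
proof
  fix x y z :: "'a \<times> 'b" and r :: complex
  show "cinner x y = cnj (cinner y x)"
    unfolding cinner_prod_def by (metis cinner_commute complex_cnj_add)
  show "cinner (x + y) z = cinner x z + cinner y z"
    unfolding cinner_prod_def by (simp add: cinner_add_left)
  show "cinner (scaleC r x) y = r * cinner x y"
    unfolding cinner_prod_def by (simp add: cinner_scaleC_left scaleC_prod_def distrib_left)
  have e: "cinner x x = complex_of_real ((norm (fst x))\<^sup>2 + (norm (snd x))\<^sup>2)"
    unfolding cinner_prod_def by (simp add: cinner_self_norm)
  show "Im (cinner x x) = 0" unfolding e by simp
  show "0 \<le> Re (cinner x x)" unfolding e by simp
  show "norm x = sqrt (Re (cinner x x))" unfolding e by (simp add: norm_prod_def)
  show "cinner x x = 0 \<longleftrightarrow> x = 0"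
  proof -
    have "cinner x x = 0 \<longleftrightarrow> (norm (fst x))\<^sup>2 + (norm (snd x))\<^sup>2 = 0"
      unfolding e by (metis of_real_0 of_real_eq_iff)
    also have "\<dots> \<longleftrightarrow> x = 0" by (simp add: prod_eq_iff add_nonneg_eq_0_iff)
    finally show ?thesis .
  qed
qed

end

instance prod :: (chilbert, chilbert) chilbert ..

lemma cinner_Pair: "cinner (a, b) (c, d) = cinner a c + cinner b d"
  by (simp add: cinner_prod_def)


lemma cnj_cinner[simp]: "cnj (cinner x y) = cinner y (x::'a::complex_inner)"
  by (metis cinner_commute)

lemma l2inner_mkl2: "c \<in> ell2 \<Longrightarrow> d \<in> ell2 \<Longrightarrow> l2inner c d = cinner (mkl2 c) (mkl2 d)"
  by (simp add: cinner_l2_coef mkl2_inverse)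

lemma l2norm_mkl2: "c \<in> ell2 \<Longrightarrow> d \<in> ell2 \<Longrightarrow> l2norm (\<lambda>i. c i - d i) = norm (mkl2 c - mkl2 d)"
  by (simp add: norm_l2_def l2n_coef coef_diff mkl2_inverse)

lemma l2_lim_iff: "l2_lim x c \<longleftrightarrow> c \<in> ell2 \<and> (\<forall>n. x n \<in> ell2) \<and> (\<lambda>n. mkl2 (x n)) \<longlonglongrightarrow> mkl2 c"
proof -
  have "(\<lambda>n. norm (mkl2 (x n) - mkl2 c)) \<longlonglongrightarrow> 0 \<longleftrightarrow> (\<lambda>n. mkl2 (x n)) \<longlonglongrightarrow> mkl2 c"
    by (simp add: tendsto_norm_zero_iff LIM_zero_iff)
  moreover have "c \<in> ell2 \<Longrightarrow> (\<forall>n. x n \<in> ell2) \<Longrightarrow>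
      (\<lambda>n. l2norm (\<lambda>i. x n i - c i)) = (\<lambda>n. norm (mkl2 (x n) - mkl2 c))"
    by (simp add: l2norm_mkl2)
  ultimately show ?thesis unfolding l2_lim_def by auto
qed

lemma l2closure_iff:
  assumes "A \<subseteq> ell2"
  shows "c \<in> l2closure A \<longleftrightarrow> c \<in> ell2 \<and> mkl2 c \<in> closure (mkl2 ` A)"
proof
  assume "c \<in> l2closure A"
  then obtain x where x: "\<forall>n. x n \<in> A" "l2_lim x c" unfolding l2closure_def by blast
  then have c: "c \<in> ell2" and lim: "(\<lambda>n. mkl2 (x n)) \<longlonglongrightarrow> mkl2 c" by (auto simp: l2_lim_iff)
  have "\<forall>n. mkl2 (x n) \<in> mkl2 ` A" using x by blast
  then have "mkl2 c \<in> closure (mkl2 ` A)" unfolding closure_sequential using lim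
    by (intro exI[where x="\<lambda>n. mkl2 (x n)"] conjI) auto
  then show "c \<in> ell2 \<and> mkl2 c \<in> closure (mkl2 ` A)" using c by blast
next
  assume c: "c \<in> ell2 \<and> mkl2 c \<in> closure (mkl2 ` A)"
  then obtain X where X: "\<forall>n. X n \<in> mkl2 ` A" "X \<longlonglongrightarrow> mkl2 c"
    unfolding closure_sequential by blast
  have "\<forall>n. \<exists>a. a \<in> A \<and> X n = mkl2 a" using X(1) by blast
  then have "\<exists>x. \<forall>n. x n \<in> A \<and> X n = mkl2 (x n)" by (rule choice)
  then obtain x where x: "\<And>n. x n \<in> A" "\<And>n. X n = mkl2 (x n)" by blast
  have X': "X = (\<lambda>n. mkl2 (x n))" using x(2) by (rule ext)
  have "\<forall>n. x n \<in> ell2" using x(1) assms by blast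
  then have "l2_lim x c" unfolding l2_lim_iff using c X(2) X' by simp
  then show "c \<in> l2closure A" unfolding l2closure_def using x(1) by blast
qed

lemma bounded_linear_coef: "bounded_linear (\<lambda>x. coef x i)"
proof
  fix x y :: "'a l2" and r :: real
  show "coef (x + y) i = coef x i + coef y i" by (simp add: coef_add)
  show "coef (scaleR r x) i = scaleR r (coef x i)"
    by (simp add: scaleR_l2.rep_eq scaleR_conv_of_real)
  show "\<exists>K. \<forall>x::'a l2. norm (coef x i) \<le> norm x * K"
    by (rule exI[of _ 1]) (simp add: coef_le_norm)
qed

lemma tendsto_coef: "(X \<longlonglongrightarrow> r) \<Longrightarrow> (\<lambda>n. coef (X n) i) \<longlonglongrightarrow> coef r i"
  by (rule bounded_linear.tendsto[OF bounded_linear_coef])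

definition delta :: "'i \<Rightarrow> 'i \<Rightarrow> complex" where
  "delta j = (\<lambda>i. if i = j then 1 else 0)"

lemma has_sum_single: "((\<lambda>i. if i = j then v else 0) has_sum v) UNIV"
proof -
  have "((\<lambda>i. if i = j then v else 0) has_sum (\<Sum>i\<in>{j}. if i = j then v else 0)) {j}"
    by (rule has_sum_finite) simp
  then have "((\<lambda>i. if i = j then v else 0) has_sum v) {j}" by simp
  then show ?thesis by (rule has_sum_cong_neutral[THEN iffD1, rotated -1]) auto
qed

lemma delta_ell2: "delta j \<in> ell2"
proof -
  have "(\<lambda>i. (cmod (delta j i))\<^sup>2) = (\<lambda>i. if i = j then 1 else 0)"
    by (auto simp: delta_def)
  then show ?thesis unfolding ell2_iff using has_sum_single[of j "1::real"]
    unfolding summable_on_def by auto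
qed

lemma l2inner_delta: "l2inner c (delta j) = c j"
proof -
  have "(\<lambda>i. c i * cnj (delta j i)) = (\<lambda>i. if i = j then c j else 0)"
    by (auto simp: delta_def)
  then show ?thesis unfolding l2inner_def using has_sum_single[of j "c j"] by (simp add: infsumI)
qed

lemma synth_delta: "((\<lambda>i. scaleC (delta j i) (\<phi> i)) has_sum \<phi> j) UNIV"
proof -
  have "(\<lambda>i. scaleC (delta j i) (\<phi> i)) = (\<lambda>i. if i = j then \<phi> j else 0)"
    by (auto simp: delta_def scaleC_one)
  then show ?thesis using has_sum_single[of j "\<phi> j"] by simp
qed

lemma delta_synthesis_dom: "delta j \<in> synthesis_dom \<phi>" and synthesis_delta: "synthesis \<phi> (delta j) = \<phi> j"
  using synth_delta[of j \<phi>] delta_ell2[of j] unfolding synthesis_dom_def synthesis_def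
  by (auto intro: infsumI)

lemma csubspace_sum:
  assumes M: "csubspace M"
  shows "finite F \<Longrightarrow> (\<And>i. i \<in> F \<Longrightarrow> f i \<in> M) \<Longrightarrow> sum f F \<in> M"
proof (induction F rule: finite_induct)
  case empty then show ?case using M by (simp add: csubspace_0)
next
  case (insert a F) then show ?case using M by (simp add: csubspace_add)
qed

lemma has_sum_in_closed_csubspace:
  fixes M :: "'a::complex_inner set"
  assumes "csubspace M" "closed M" "(f has_sum s) A" "\<And>i. f i \<in> M"
  shows "s \<in> M"
proof -
  have "(sum f \<longlongrightarrow> s) (finite_subsets_at_top A)" using assms(3) by (simp add: has_sum_def)
  moreover have "\<forall>\<^sub>F F in finite_subsets_at_top A. sum f F \<in> M"
    by (rule eventually_finite_subsets_at_top_weakI) (use csubspace_sum[OF assms(1)] assms(4) in blast)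
  ultimately show ?thesis
    using Lim_in_closed_set[OF assms(2)] finite_subsets_at_top_neq_bot by blast
qed

definition coefs :: "('i \<Rightarrow> 'h::complex_inner) \<Rightarrow> 'h \<Rightarrow> 'i \<Rightarrow> complex" where
  "coefs \<phi> x = (\<lambda>i. cinner x (\<phi> i))"

lemma synthesis_adj:
  fixes \<phi> :: "'i \<Rightarrow> 'h::chilbert"
  assumes "d \<in> synthesis_dom \<phi>"
  shows "l2inner (coefs \<phi> x) d = cinner x (synthesis \<phi> d)"
proof -
  obtain s where s: "((\<lambda>i. scaleC (d i) (\<phi> i)) has_sum s) UNIV"
    using assms unfolding synthesis_dom_def by blast
  then have syn: "synthesis \<phi> d = s" unfolding synthesis_def by (rule infsumI)
  have "((\<lambda>i. cinner (scaleC (d i) (\<phi> i)) x) has_sum cinner s x) UNIV"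
    by (rule has_sum_bounded_linear[OF bounded_linear_cinner_left s])
  then have "((\<lambda>i. d i * cinner (\<phi> i) x) has_sum cinner s x) UNIV"
    by (simp add: cinner_scaleC_left)
  then have A: "((\<lambda>i. cnj (d i * cinner (\<phi> i) x)) has_sum cnj (cinner s x)) UNIV"
    by (simp only: has_sum_cnj_iff)
  have B: "(\<lambda>i. cnj (d i * cinner (\<phi> i) x)) = (\<lambda>i. coefs \<phi> x i * cnj (d i))"
    by (auto simp: coefs_def mult.commute)
  have C: "cnj (cinner s x) = cinner x s" by simp
  have "((\<lambda>i. coefs \<phi> x i * cnj (d i)) has_sum cinner x s) UNIV" using A unfolding B C .
  then show ?thesis unfolding l2inner_def syn by (rule infsumI)
qed


lemma mkl2_add: "d \<in> ell2 \<Longrightarrow> d' \<in> ell2 \<Longrightarrow> mkl2 d + mkl2 d' = mkl2 (\<lambda>i. d i + d' i)"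
  by (rule coef_inject[THEN iffD1]) (simp add: coef_add mkl2_inverse ell2_add)

lemma mkl2_scale: "d \<in> ell2 \<Longrightarrow> scaleC a (mkl2 d) = mkl2 (\<lambda>i. a * d i)"
  by (rule coef_inject[THEN iffD1]) (simp add: coef_scaleC mkl2_inverse ell2_scale)

lemma mkl2_zero: "mkl2 (\<lambda>i. 0) = 0"
  by (rule coef_inject[THEN iffD1]) (simp add: coef_zero mkl2_inverse)

lemma mkl2_uminus: "mkl2 (\<lambda>i. - coef e i) = - e"
  by (rule coef_inject[THEN iffD1]) (simp add: uminus_l2.rep_eq mkl2_inverse ell2_uminus coef_ell2)

lemma mkl2_coef: "mkl2 (coef e) = e"
  by (rule coef_inverse)

lemma synthesis_dom_add:
  assumes "d \<in> synthesis_dom \<phi>" "d' \<in> synthesis_dom \<phi>"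
  shows "(\<lambda>i. d i + d' i) \<in> synthesis_dom \<phi>"
    "synthesis \<phi> (\<lambda>i. d i + d' i) = synthesis \<phi> d + synthesis \<phi> d'"
proof -
  obtain s s' where s: "((\<lambda>i. scaleC (d i) (\<phi> i)) has_sum s) UNIV" "((\<lambda>i. scaleC (d' i) (\<phi> i)) has_sum s') UNIV"
    using assms unfolding synthesis_dom_def by blast
  have h: "((\<lambda>i. scaleC (d i + d' i) (\<phi> i)) has_sum s + s') UNIV"
    unfolding scaleC_add_left by (rule has_sum_add[OF s])
  show "(\<lambda>i. d i + d' i) \<in> synthesis_dom \<phi>"
    using h assms ell2_add unfolding synthesis_dom_def by blast
  show "synthesis \<phi> (\<lambda>i. d i + d' i) = synthesis \<phi> d + synthesis \<phi> d'"
    unfolding synthesis_def using h s by (simp add: infsumI)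
qed

lemma synthesis_dom_scale:
  fixes \<phi> :: "'i \<Rightarrow> 'h::chilbert"
  assumes "d \<in> synthesis_dom \<phi>"
  shows "(\<lambda>i. a * d i) \<in> synthesis_dom \<phi>"
    "synthesis \<phi> (\<lambda>i. a * d i) = scaleC a (synthesis \<phi> d)"
proof -
  obtain s where s: "((\<lambda>i. scaleC (d i) (\<phi> i)) has_sum s) UNIV"
    using assms unfolding synthesis_dom_def by blast
  have h: "((\<lambda>i. scaleC (a * d i) (\<phi> i)) has_sum scaleC a s) UNIV"
    unfolding scaleC_scaleC[symmetric] by (rule has_sum_bounded_linear[OF bounded_linear_scaleC s])
  show "(\<lambda>i. a * d i) \<in> synthesis_dom \<phi>"
    using h assms ell2_scale unfolding synthesis_dom_def by blast
  show "synthesis \<phi> (\<lambda>i. a * d i) = scaleC a (synthesis \<phi> d)"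
    unfolding synthesis_def using h s by (simp add: infsumI)
qed

lemma synthesis_dom_zero: "(\<lambda>i. 0) \<in> synthesis_dom \<phi>" "synthesis \<phi> (\<lambda>i. 0) = 0"
  unfolding synthesis_dom_def synthesis_def by (auto intro: has_sum_0)

definition graph :: "('i \<Rightarrow> 'h::chilbert) \<Rightarrow> ('i l2 \<times> 'h) set" where
  "graph \<phi> = (\<lambda>d. (mkl2 d, synthesis \<phi> d)) ` synthesis_dom \<phi>"

lemma synthesis_dom_ell2: "d \<in> synthesis_dom \<phi> \<Longrightarrow> d \<in> ell2"
  by (simp add: synthesis_dom_def)

lemma csubspace_graph: "csubspace (graph \<phi>)"
  unfolding csubspace_def
proof (intro conjI ballI allI)
  have "(mkl2 (\<lambda>i. 0), synthesis \<phi> (\<lambda>i. 0)) \<in> graph \<phi>"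
    unfolding graph_def by (rule image_eqI[OF refl synthesis_dom_zero(1)])
  then show "0 \<in> graph \<phi>" by (simp add: mkl2_zero synthesis_dom_zero(2) zero_prod_def)
next
  fix u v assume "u \<in> graph \<phi>" "v \<in> graph \<phi>"
  then obtain d d' where d: "d \<in> synthesis_dom \<phi>" "u = (mkl2 d, synthesis \<phi> d)"
    and d': "d' \<in> synthesis_dom \<phi>" "v = (mkl2 d', synthesis \<phi> d')" unfolding graph_def by blast
  have "u + v = (mkl2 (\<lambda>i. d i + d' i), synthesis \<phi> (\<lambda>i. d i + d' i))"
    using d d' synthesis_dom_add[OF d(1) d'(1)] mkl2_add[OF synthesis_dom_ell2[OF d(1)] synthesis_dom_ell2[OF d'(1)]] by simp
  then show "u + v \<in> graph \<phi>" unfolding graph_def using synthesis_dom_add[OF d(1) d'(1)] by blast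
next
  fix a u assume "u \<in> graph \<phi>"
  then obtain d where d: "d \<in> synthesis_dom \<phi>" "u = (mkl2 d, synthesis \<phi> d)" unfolding graph_def by blast
  have "scaleC a u = (mkl2 (\<lambda>i. a * d i), synthesis \<phi> (\<lambda>i. a * d i))"
    using d synthesis_dom_scale[OF d(1)] mkl2_scale[OF synthesis_dom_ell2[OF d(1)]] by simp
  then show "scaleC a u \<in> graph \<phi>" unfolding graph_def using synthesis_dom_scale[OF d(1)] by blast
qed

lemma adj_in_graph_closure:
  fixes \<phi> :: "'i \<Rightarrow> 'h::chilbert"
  assumes c: "c \<in> ell2" and H: "\<And>x. x \<in> analysis_dom \<phi> \<Longrightarrow> l2inner (coefs \<phi> x) c = cinner x g"
  shows "(c, g) \<in> graph_closure (synthesis_dom \<phi>) (synthesis \<phi>)"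
proof -
  define W where "W = closure (graph \<phi>)"
  have W: "csubspace W" "closed W" unfolding W_def by (auto intro: csubspace_closure csubspace_graph)
  define p where "p = (mkl2 c, g)"
  define q where "q = p - orth_proj W p"
  have orth: "cinner q w = 0" if "w \<in> W" for w
    unfolding q_def using orth_proj(2)[OF W that] .
  obtain e x where qex: "q = (e, x)" by (cases q)
  have xj: "cinner x (\<phi> j) = - coef e j" for j
  proof -
    have "(mkl2 (delta j), synthesis \<phi> (delta j)) \<in> graph \<phi>"
      unfolding graph_def by (rule image_eqI[OF refl delta_synthesis_dom])
    then have "(mkl2 (delta j), \<phi> j) \<in> W"
      unfolding W_def synthesis_delta using closure_subset by blast
    then have "cinner q (mkl2 (delta j), \<phi> j) = 0" by (rule orth)
    then have "cinner e (mkl2 (delta j)) + cinner x (\<phi> j) = 0" by (simp add: qex cinner_Pair)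
    moreover have "cinner e (mkl2 (delta j)) = coef e j"
      by (simp add: cinner_l2_coef mkl2_inverse delta_ell2 l2inner_delta)
    ultimately show ?thesis by (simp add: eq_neg_iff_add_eq_0 add.commute)
  qed
  have cx: "coefs \<phi> x = (\<lambda>j. - coef e j)" by (simp add: coefs_def xj)
  have cxl: "coefs \<phi> x \<in> ell2" unfolding cx by (simp add: ell2_uminus coef_ell2)
  have xdom: "x \<in> analysis_dom \<phi>" using cxl by (simp add: analysis_dom_def coefs_def)
  have "cinner q p = cinner e (mkl2 c) + cinner x g" by (simp add: qex p_def cinner_Pair)
  also have "cinner x g = l2inner (coefs \<phi> x) c" using H[OF xdom] by simp
  also have "\<dots> = cinner (- e) (mkl2 c)"
    using l2inner_mkl2[OF cxl c] unfolding cx mkl2_uminus .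
  finally have qp: "cinner q p = 0" by (simp add: cinner_minus_left)
  have "cinner q q = cinner q p - cinner q (orth_proj W p)"
    unfolding q_def by (simp only: cinner_diff_right)
  also have "\<dots> = 0" using qp orth orth_proj(1)[OF W] by simp
  finally have "q = 0" by (rule cinner_eq_zero_self)
  then have "p \<in> W" using orth_proj(1)[OF W, of p] unfolding q_def by simp
  then obtain Y where Y: "\<forall>n. Y n \<in> graph \<phi>" "Y \<longlonglongrightarrow> p"
    unfolding W_def closure_sequential by blast
  have "\<forall>n. \<exists>d. d \<in> synthesis_dom \<phi> \<and> Y n = (mkl2 d, synthesis \<phi> d)"
    using Y(1) unfolding graph_def by blast
  then have "\<exists>d. \<forall>n. d n \<in> synthesis_dom \<phi> \<and> Y n = (mkl2 (d n), synthesis \<phi> (d n))" by (rule choice)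
  then obtain d where d: "\<And>n. d n \<in> synthesis_dom \<phi>" "\<And>n. Y n = (mkl2 (d n), synthesis \<phi> (d n))" by blast
  have Yd: "Y = (\<lambda>n. (mkl2 (d n), synthesis \<phi> (d n)))" using d(2) by (rule ext)
  have l1: "(\<lambda>n. mkl2 (d n)) \<longlonglongrightarrow> mkl2 c"
    using tendsto_fst[OF Y(2)] unfolding Yd p_def by simp
  have l2: "(\<lambda>n. synthesis \<phi> (d n)) \<longlonglongrightarrow> g"
    using tendsto_snd[OF Y(2)] unfolding Yd p_def by simp
  have "l2_lim d c" unfolding l2_lim_iff using c l1 d(1) synthesis_dom_ell2 by blast
  then show ?thesis unfolding graph_closure_def using d(1) l2 by blast
qed


lemma mkl2_diff: "c \<in> ell2 \<Longrightarrow> d \<in> ell2 \<Longrightarrow> mkl2 (\<lambda>i. c i - d i) = mkl2 c - mkl2 d"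
  by (rule coef_inject[THEN iffD1]) (simp add: coef_diff mkl2_inverse ell2_diff)

lemma coefs_add: "coefs \<phi> (x + y) = (\<lambda>i. coefs \<phi> x i + coefs \<phi> y i)"
  by (simp add: coefs_def cinner_add_left)

lemma coefs_diff: "coefs \<phi> (x - y) = (\<lambda>i. coefs \<phi> x i - coefs \<phi> y i)"
  by (simp add: coefs_def cinner_diff_left)

lemma coefs_scale: "coefs \<phi> (scaleC a x) = (\<lambda>i. a * coefs \<phi> x i)"
  by (simp add: coefs_def cinner_scaleC_left)

lemma coefs_zero: "coefs \<phi> 0 = (\<lambda>i. 0)"
  by (simp add: coefs_def)

lemma analysis_dom_iff: "x \<in> analysis_dom \<phi> \<longleftrightarrow> coefs \<phi> x \<in> ell2"
  by (simp add: analysis_dom_def coefs_def)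

lemma csubspace_analysis_dom: "csubspace (analysis_dom \<phi>)"
  unfolding csubspace_def analysis_dom_iff
  by (auto simp: coefs_add coefs_scale coefs_zero analysis_dom_iff intro: ell2_add ell2_scale)

lemma csubspace_H_Psi: "csubspace (H_Psi \<phi>)" and closed_H_Psi: "closed (H_Psi \<phi>)"
  unfolding H_Psi_def by (auto intro: csubspace_closure csubspace_analysis_dom)

lemma analysis_dom_H_Psi: "analysis_dom \<phi> \<subseteq> H_Psi \<phi>"
  unfolding H_Psi_def by (rule closure_subset)

lemma orth_H_Psi_zero:
  assumes "g \<in> H_Psi \<phi>" "\<And>x. x \<in> analysis_dom \<phi> \<Longrightarrow> cinner x g = 0"
  shows "g = 0"
proof -
  have "cinner g g = 0" using orth_closure[of g "analysis_dom \<phi>" g] assms unfolding H_Psi_def by blast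
  then show ?thesis by (rule cinner_eq_zero_self)
qed

abbreviation proj_seq :: "('i \<Rightarrow> 'h::chilbert) \<Rightarrow> 'i \<Rightarrow> 'h" where
  "proj_seq \<psi> \<equiv> (\<lambda>i. orth_proj (H_Psi \<psi>) (\<psi> i))"

lemma P_in: "orth_proj (H_Psi \<psi>) v \<in> H_Psi \<psi>"
  by (rule orth_proj(1)[OF csubspace_H_Psi closed_H_Psi])

lemma P_orth: "m \<in> H_Psi \<psi> \<Longrightarrow> cinner (v - orth_proj (H_Psi \<psi>) v) m = 0"
  by (rule orth_proj(2)[OF csubspace_H_Psi closed_H_Psi])

lemma P_orth': "m \<in> H_Psi \<psi> \<Longrightarrow> cinner m (v - orth_proj (H_Psi \<psi>) v) = 0"
  using P_orth[of m \<psi> v] by (metis cnj_cinner complex_cnj_zero)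

lemma proj_seq_H: "f \<in> H_Psi \<psi> \<Longrightarrow> cinner f (proj_seq \<psi> i) = cinner f (\<psi> i)"
  using P_orth'[of f \<psi> "\<psi> i"] by (simp add: cinner_diff_right)

lemma proj_seq_gen: "cinner x (proj_seq \<psi> i) = cinner (orth_proj (H_Psi \<psi>) x) (\<psi> i)"
proof -
  let ?P = "orth_proj (H_Psi \<psi>)"
  have "cinner x (?P (\<psi> i)) = cinner (?P x) (?P (\<psi> i)) + cinner (x - ?P x) (?P (\<psi> i))"
    by (simp add: cinner_diff_left)
  also have "cinner (x - ?P x) (?P (\<psi> i)) = 0" by (rule P_orth[OF P_in])
  also have "cinner (?P x) (?P (\<psi> i)) = cinner (?P x) (\<psi> i)" by (rule proj_seq_H[OF P_in])
  finally show ?thesis by simp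
qed

lemma coefs_proj_seq: "coefs (proj_seq \<psi>) x = coefs \<psi> (orth_proj (H_Psi \<psi>) x)"
  by (simp add: coefs_def proj_seq_gen)

lemma coefs_proj_seq_H: "f \<in> H_Psi \<psi> \<Longrightarrow> coefs (proj_seq \<psi>) f = coefs \<psi> f"
  by (simp add: coefs_def proj_seq_H)

definition Adj :: "('i \<Rightarrow> 'h::chilbert) \<Rightarrow> ('i \<Rightarrow> complex) \<Rightarrow> 'h \<Rightarrow> bool" where
  "Adj \<psi> c g \<longleftrightarrow> c \<in> ell2 \<and> g \<in> H_Psi \<psi> \<and> (\<forall>x\<in>analysis_dom \<psi>. l2inner (coefs \<psi> x) c = cinner x g)"

lemma Adj_unique:
  assumes "Adj \<psi> c g" "Adj \<psi> c g'" shows "g = g'"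
proof -
  have "g - g' = 0"
  proof (rule orth_H_Psi_zero)
    show "g - g' \<in> H_Psi \<psi>" using assms csubspace_diff[OF csubspace_H_Psi] unfolding Adj_def by blast
    show "cinner x (g - g') = 0" if "x \<in> analysis_dom \<psi>" for x
      using assms that unfolding Adj_def by (simp add: cinner_diff_right)
  qed
  then show ?thesis by simp
qed

lemma analysis_adj_dom_iff: "c \<in> analysis_adj_dom \<psi> \<longleftrightarrow> (\<exists>g. Adj \<psi> c g)"
  unfolding analysis_adj_dom_def Adj_def coefs_def by blast

lemma analysis_adj_eq: "Adj \<psi> c g \<Longrightarrow> analysis_adj \<psi> c = g"
  unfolding analysis_adj_def
proof (rule the_equality)
  assume "Adj \<psi> c g"
  then show "g \<in> H_Psi \<psi> \<and> (\<forall>f\<in>analysis_dom \<psi>. l2inner (\<lambda>i. cinner f (\<psi> i)) c = cinner f g)"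
    unfolding Adj_def coefs_def by blast
next
  fix g' assume a: "Adj \<psi> c g" and "g' \<in> H_Psi \<psi> \<and> (\<forall>f\<in>analysis_dom \<psi>. l2inner (\<lambda>i. cinner f (\<psi> i)) c = cinner f g')"
  then have "Adj \<psi> c g'" using a unfolding Adj_def coefs_def by blast
  then show "g' = g" using Adj_unique a by blast
qed

lemma Adj_diff: "Adj \<psi> c g \<Longrightarrow> Adj \<psi> d h \<Longrightarrow> Adj \<psi> (\<lambda>i. c i - d i) (g - h)"
proof -
  assume a: "Adj \<psi> c g" "Adj \<psi> d h"
  have "l2inner (coefs \<psi> x) (\<lambda>i. c i - d i) = cinner x (g - h)" if "x \<in> analysis_dom \<psi>" for x
  proof -
    have x: "coefs \<psi> x \<in> ell2" using that analysis_dom_iff by blast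
    have "l2inner (coefs \<psi> x) (\<lambda>i. c i - d i) = cinner (mkl2 (coefs \<psi> x)) (mkl2 c - mkl2 d)"
      using a x by (simp add: l2inner_mkl2 ell2_diff mkl2_diff Adj_def)
    also have "\<dots> = l2inner (coefs \<psi> x) c - l2inner (coefs \<psi> x) d"
      using a x by (simp add: l2inner_mkl2 cinner_diff_right Adj_def)
    also have "\<dots> = cinner x (g - h)" using a that by (simp add: Adj_def cinner_diff_right)
    finally show ?thesis .
  qed
  then show ?thesis using a csubspace_diff[OF csubspace_H_Psi] ell2_diff unfolding Adj_def by blast
qed

lemma Adj_add: "Adj \<psi> c g \<Longrightarrow> Adj \<psi> d h \<Longrightarrow> Adj \<psi> (\<lambda>i. c i + d i) (g + h)"
proof -
  assume a: "Adj \<psi> c g" "Adj \<psi> d h"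
  have "l2inner (coefs \<psi> x) (\<lambda>i. c i + d i) = cinner x (g + h)" if "x \<in> analysis_dom \<psi>" for x
  proof -
    have x: "coefs \<psi> x \<in> ell2" using that analysis_dom_iff by blast
    have "l2inner (coefs \<psi> x) (\<lambda>i. c i + d i) = cinner (mkl2 (coefs \<psi> x)) (mkl2 c + mkl2 d)"
      using a x by (simp add: l2inner_mkl2 ell2_add mkl2_add Adj_def)
    also have "\<dots> = l2inner (coefs \<psi> x) c + l2inner (coefs \<psi> x) d"
      using a x by (simp add: l2inner_mkl2 cinner_add_right Adj_def)
    also have "\<dots> = cinner x (g + h)" using a that by (simp add: Adj_def cinner_add_right)
    finally show ?thesis .
  qed
  then show ?thesis using a csubspace_add[OF csubspace_H_Psi] ell2_add unfolding Adj_def by blast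
qed

lemma Adj_scale: "Adj \<psi> c g \<Longrightarrow> Adj \<psi> (\<lambda>i. a * c i) (scaleC a g)"
proof -
  assume a: "Adj \<psi> c g"
  have "l2inner (coefs \<psi> x) (\<lambda>i. a * c i) = cinner x (scaleC a g)" if "x \<in> analysis_dom \<psi>" for x
  proof -
    have x: "coefs \<psi> x \<in> ell2" using that analysis_dom_iff by blast
    have "l2inner (coefs \<psi> x) (\<lambda>i. a * c i) = cinner (mkl2 (coefs \<psi> x)) (scaleC a (mkl2 c))"
      using a x by (simp add: l2inner_mkl2 ell2_scale mkl2_scale Adj_def)
    also have "\<dots> = cnj a * l2inner (coefs \<psi> x) c"
      using a x by (simp add: l2inner_mkl2 cinner_scaleC_right Adj_def)
    also have "\<dots> = cinner x (scaleC a g)" using a that by (simp add: Adj_def cinner_scaleC_right)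
    finally show ?thesis .
  qed
  then show ?thesis using a csubspace_scale[OF csubspace_H_Psi] ell2_scale unfolding Adj_def by blast
qed

section \<open>The analysis operator as a map into the l2 type\<close>

definition Cl :: "('i \<Rightarrow> 'h::chilbert) \<Rightarrow> 'h \<Rightarrow> 'i l2" where
  "Cl \<psi> x = mkl2 (coefs \<psi> x)"

lemma coef_Cl: "x \<in> analysis_dom \<psi> \<Longrightarrow> coef (Cl \<psi> x) = coefs \<psi> x"
  by (simp add: Cl_def mkl2_inverse analysis_dom_iff)

lemma Cl_diff: "x \<in> analysis_dom \<psi> \<Longrightarrow> y \<in> analysis_dom \<psi> \<Longrightarrow> Cl \<psi> (x - y) = Cl \<psi> x - Cl \<psi> y"
  by (simp add: Cl_def coefs_diff mkl2_diff analysis_dom_iff)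

lemma Cl_add: "x \<in> analysis_dom \<psi> \<Longrightarrow> y \<in> analysis_dom \<psi> \<Longrightarrow> Cl \<psi> (x + y) = Cl \<psi> x + Cl \<psi> y"
  by (simp add: Cl_def coefs_add mkl2_add analysis_dom_iff)

lemma Cl_scale: "x \<in> analysis_dom \<psi> \<Longrightarrow> Cl \<psi> (scaleC a x) = scaleC a (Cl \<psi> x)"
  by (simp add: Cl_def coefs_scale mkl2_scale analysis_dom_iff)

lemma Cl_zero: "Cl \<psi> 0 = 0"
  by (simp add: Cl_def coefs_zero mkl2_zero)

lemma l2inner_Cl: "x \<in> analysis_dom \<psi> \<Longrightarrow> c \<in> ell2 \<Longrightarrow> l2inner (coefs \<psi> x) c = cinner (Cl \<psi> x) (mkl2 c)"
  by (simp add: Cl_def l2inner_mkl2 analysis_dom_iff)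

lemma norm_Cl_sq: "x \<in> analysis_dom \<psi> \<Longrightarrow> (norm (Cl \<psi> x))\<^sup>2 = (\<Sum>\<^sub>\<infinity>i. (cmod (cinner x (\<psi> i)))\<^sup>2)"
  by (simp add: norm_l2_sq coef_Cl coefs_def)

lemma lower_bound:
  assumes "lower_frame_sequence \<psi>"
  obtains A where "A > 0" "\<And>x. x \<in> analysis_dom \<psi> \<Longrightarrow> A * (norm x)\<^sup>2 \<le> (norm (Cl \<psi> x))\<^sup>2"
  using assms unfolding lower_frame_sequence_def by (auto simp: norm_Cl_sq)


lemma Cl_closed:
  assumes "\<And>n. x n \<in> analysis_dom \<psi>" "x \<longlonglongrightarrow> x0" "(\<lambda>n. Cl \<psi> (x n)) \<longlonglongrightarrow> r"
  shows "x0 \<in> analysis_dom \<psi>" "Cl \<psi> x0 = r"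
proof -
  have "cinner x0 (\<psi> i) = coef r i" for i
  proof -
    have "(\<lambda>n. cinner (x n) (\<psi> i)) \<longlonglongrightarrow> cinner x0 (\<psi> i)"
      by (intro tendsto_intros assms(2))
    moreover have "(\<lambda>n. coef (Cl \<psi> (x n)) i) \<longlonglongrightarrow> coef r i" by (rule tendsto_coef[OF assms(3)])
    moreover have "(\<lambda>n. coef (Cl \<psi> (x n)) i) = (\<lambda>n. cinner (x n) (\<psi> i))"
      using assms(1) by (simp add: coef_Cl coefs_def)
    ultimately show ?thesis using LIMSEQ_unique by metis
  qed
  then have cr: "coefs \<psi> x0 = coef r" by (simp add: coefs_def fun_eq_iff)
  then show "x0 \<in> analysis_dom \<psi>" by (simp add: analysis_dom_iff coef_ell2)
  show "Cl \<psi> x0 = r" by (simp add: Cl_def cr mkl2_coef)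
qed

context
  fixes \<psi> :: "'i \<Rightarrow> 'h::chilbert"
  assumes lfs: "lower_frame_sequence \<psi>"
begin

lemma lb: "\<exists>A>0. \<forall>x\<in>analysis_dom \<psi>. A * (norm x)\<^sup>2 \<le> (norm (Cl \<psi> x))\<^sup>2"
  using lfs unfolding lower_frame_sequence_def by (auto simp: norm_Cl_sq)

lemma Cl_inj_zero: "x \<in> analysis_dom \<psi> \<Longrightarrow> Cl \<psi> x = 0 \<Longrightarrow> x = 0"
proof -
  assume x: "x \<in> analysis_dom \<psi>" "Cl \<psi> x = 0"
  obtain A where A: "A > 0" "\<And>x. x \<in> analysis_dom \<psi> \<Longrightarrow> A * (norm x)\<^sup>2 \<le> (norm (Cl \<psi> x))\<^sup>2" using lb by blast
  have "A * (norm x)\<^sup>2 \<le> 0" using A(2)[OF x(1)] x(2) by simp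
  then have "(norm x)\<^sup>2 \<le> 0" using A(1) by (simp add: mult_le_0_iff)
  then show "x = 0" by simp
qed

lemma Cl_inj: "inj_on (Cl \<psi>) (analysis_dom \<psi>)"
proof (rule inj_onI)
  fix x y assume xy: "x \<in> analysis_dom \<psi>" "y \<in> analysis_dom \<psi>" "Cl \<psi> x = Cl \<psi> y"
  have "x - y \<in> analysis_dom \<psi>" using xy csubspace_diff[OF csubspace_analysis_dom] by blast
  moreover have "Cl \<psi> (x - y) = 0" using xy by (simp add: Cl_diff)
  ultimately have "x - y = 0" by (rule Cl_inj_zero)
  then show "x = y" by simp
qed

lemma norm_le_Cl: "\<exists>A>0. \<forall>x\<in>analysis_dom \<psi>. sqrt A * norm x \<le> norm (Cl \<psi> x)"
proof -
  obtain A where A: "A > 0" "\<And>x. x \<in> analysis_dom \<psi> \<Longrightarrow> A * (norm x)\<^sup>2 \<le> (norm (Cl \<psi> x))\<^sup>2" using lb by blast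
  have "sqrt A * norm x \<le> norm (Cl \<psi> x)" if "x \<in> analysis_dom \<psi>" for x
  proof -
    have "(sqrt A * norm x)\<^sup>2 \<le> (norm (Cl \<psi> x))\<^sup>2" using A that by (simp add: power_mult_distrib)
    then show ?thesis by (rule power2_le_imp_le) simp
  qed
  then show ?thesis using A(1) by blast
qed

definition RC :: "'i l2 set" where "RC = Cl \<psi> ` analysis_dom \<psi>"

lemma csubspace_RC: "csubspace RC"
  unfolding csubspace_def RC_def
proof (intro conjI ballI allI)
  show "0 \<in> Cl \<psi> ` analysis_dom \<psi>"
    using Cl_zero csubspace_0[OF csubspace_analysis_dom] by (metis image_eqI)
next
  fix r s assume "r \<in> Cl \<psi> ` analysis_dom \<psi>" "s \<in> Cl \<psi> ` analysis_dom \<psi>"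
  then obtain x y where "x \<in> analysis_dom \<psi>" "y \<in> analysis_dom \<psi>" "r = Cl \<psi> x" "s = Cl \<psi> y" by blast
  then show "r + s \<in> Cl \<psi> ` analysis_dom \<psi>"
    using Cl_add csubspace_add[OF csubspace_analysis_dom] by (metis image_eqI)
next
  fix a r assume "r \<in> Cl \<psi> ` analysis_dom \<psi>"
  then obtain x where "x \<in> analysis_dom \<psi>" "r = Cl \<psi> x" by blast
  then show "scaleC a r \<in> Cl \<psi> ` analysis_dom \<psi>"
    using Cl_scale csubspace_scale[OF csubspace_analysis_dom] by (metis image_eqI)
qed

lemma closed_RC: "closed RC"
  unfolding closed_sequential_limits
proof (intro allI impI, elim conjE)
  fix Y r assume Y: "\<forall>n. Y n \<in> RC" "Y \<longlonglongrightarrow> r"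
  have "\<forall>n. \<exists>x. x \<in> analysis_dom \<psi> \<and> Y n = Cl \<psi> x" using Y(1) unfolding RC_def by blast
  then have "\<exists>x. \<forall>n. x n \<in> analysis_dom \<psi> \<and> Y n = Cl \<psi> (x n)" by (rule choice)
  then obtain x where x: "\<And>n. x n \<in> analysis_dom \<psi>" "\<And>n. Y n = Cl \<psi> (x n)" by blast
  obtain A where A: "A > 0" "\<And>x. x \<in> analysis_dom \<psi> \<Longrightarrow> sqrt A * norm x \<le> norm (Cl \<psi> x)"
    using norm_le_Cl by blast
  have CY: "Cauchy Y" using Y(2) by (rule LIMSEQ_imp_Cauchy)
  have "Cauchy x"
  proof (rule metric_CauchyI)
    fix e :: real assume e: "0 < e"
    have "0 < e * sqrt A" using e A by simp
    then obtain N where N: "\<forall>m\<ge>N. \<forall>n\<ge>N. dist (Y m) (Y n) < e * sqrt A"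
      using CY metric_CauchyD by blast
    have "dist (x m) (x n) < e" if "m \<ge> N" "n \<ge> N" for m n
    proof -
      have d: "x m - x n \<in> analysis_dom \<psi>" using x(1) csubspace_diff[OF csubspace_analysis_dom] by blast
      have "sqrt A * norm (x m - x n) \<le> norm (Cl \<psi> (x m - x n))" by (rule A(2)[OF d])
      also have "\<dots> = dist (Y m) (Y n)" using x by (simp add: Cl_diff dist_norm)
      also have "\<dots> < e * sqrt A" using N that by blast
      finally have "sqrt A * norm (x m - x n) < sqrt A * e" by (simp add: mult.commute)
      then show ?thesis using A(1) by (simp add: dist_norm)
    qed
    then show "\<exists>N. \<forall>m\<ge>N. \<forall>n\<ge>N. dist (x m) (x n) < e" by blast
  qed
  then obtain x0 where x0: "x \<longlonglongrightarrow> x0" using Cauchy_convergent convergent_def by blast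
  have Yx: "Y = (\<lambda>n. Cl \<psi> (x n))" using x(2) by (rule ext)
  have "x0 \<in> analysis_dom \<psi>" "Cl \<psi> x0 = r" using Cl_closed[OF x(1) x0] Y(2) unfolding Yx by auto
  then show "r \<in> RC" unfolding RC_def by blast
qed

lemma Gamma_surj:
  assumes h: "h \<in> H_Psi \<psi>"
  shows "\<exists>y\<in>analysis_dom \<psi>. Adj \<psi> (coefs \<psi> y) h"
proof -
  define Inv where "Inv = the_inv_into (analysis_dom \<psi>) (Cl \<psi>)"
  have Inv: "Inv (Cl \<psi> x) = x" if "x \<in> analysis_dom \<psi>" for x
    unfolding Inv_def using Cl_inj that by (rule the_inv_into_f_f)
  define L where "L r = cinner (Inv r) h" for r
  obtain A where A: "A > 0" "\<And>x. x \<in> analysis_dom \<psi> \<Longrightarrow> sqrt A * norm x \<le> norm (Cl \<psi> x)"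
    using norm_le_Cl by blast
  have "\<exists>z\<in>RC. \<forall>r\<in>RC. L r = cinner r z"
  proof (rule riesz_sub[OF csubspace_RC closed_RC, where K = "norm h / sqrt A"])
    fix r s assume "r \<in> RC" "s \<in> RC"
    then obtain x y where xy: "x \<in> analysis_dom \<psi>" "y \<in> analysis_dom \<psi>" "r = Cl \<psi> x" "s = Cl \<psi> y"
      unfolding RC_def by blast
    have "x + y \<in> analysis_dom \<psi>" using xy csubspace_add[OF csubspace_analysis_dom] by blast
    then show "L (r + s) = L r + L s"
      using xy by (simp add: L_def Inv Cl_add[symmetric] cinner_add_left)
  next
    fix a r assume "r \<in> RC"
    then obtain x where x: "x \<in> analysis_dom \<psi>" "r = Cl \<psi> x" unfolding RC_def by blast
    have "scaleC a x \<in> analysis_dom \<psi>" using x csubspace_scale[OF csubspace_analysis_dom] by blast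
    then show "L (scaleC a r) = a * L r"
      using x by (simp add: L_def Inv Cl_scale[symmetric] cinner_scaleC_left)
  next
    fix r assume "r \<in> RC"
    then obtain x where x: "x \<in> analysis_dom \<psi>" "r = Cl \<psi> x" unfolding RC_def by blast
    have "cmod (L r) = cmod (cinner x h)" using x by (simp add: L_def Inv)
    also have "\<dots> \<le> norm x * norm h" by (rule cinner_CS)
    also have "norm x \<le> norm r / sqrt A" using A x by (simp add: field_simps mult.commute)
    then have "norm x * norm h \<le> norm r / sqrt A * norm h" by (rule mult_right_mono) simp
    finally show "cmod (L r) \<le> norm h / sqrt A * norm r" by (simp add: field_simps)
  qed
  then obtain z where z: "z \<in> RC" "\<And>r. r \<in> RC \<Longrightarrow> L r = cinner r z" by blast
  then obtain y where y: "y \<in> analysis_dom \<psi>" "z = Cl \<psi> y" unfolding RC_def by blast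
  have "l2inner (coefs \<psi> x) (coefs \<psi> y) = cinner x h" if x: "x \<in> analysis_dom \<psi>" for x
  proof -
    have "l2inner (coefs \<psi> x) (coefs \<psi> y) = cinner (Cl \<psi> x) (Cl \<psi> y)"
      using x y by (simp add: l2inner_Cl analysis_dom_iff Cl_def[symmetric])
    also have "\<dots> = L (Cl \<psi> x)" using z(2)[of "Cl \<psi> x"] x y unfolding RC_def by simp
    also have "\<dots> = cinner x h" using x by (simp add: L_def Inv)
    finally show ?thesis .
  qed
  moreover have "coefs \<psi> y \<in> ell2" using y(1) analysis_dom_iff by blast
  ultimately have "Adj \<psi> (coefs \<psi> y) h" using h unfolding Adj_def by blast
  then show ?thesis using y by blast
qed

lemma Gamma_inj:
  assumes "y \<in> analysis_dom \<psi>" "Adj \<psi> (coefs \<psi> y) h" "y' \<in> analysis_dom \<psi>" "Adj \<psi> (coefs \<psi> y') h"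
  shows "y = y'"
proof -
  have "Adj \<psi> (\<lambda>i. coefs \<psi> y i - coefs \<psi> y' i) (h - h)" using Adj_diff assms by blast
  then have a: "Adj \<psi> (coefs \<psi> (y - y')) 0" by (simp add: coefs_diff)
  have d: "y - y' \<in> analysis_dom \<psi>" using assms csubspace_diff[OF csubspace_analysis_dom] by blast
  have "l2inner (coefs \<psi> (y - y')) (coefs \<psi> (y - y')) = 0" using a d unfolding Adj_def by simp
  then have "cinner (Cl \<psi> (y - y')) (Cl \<psi> (y - y')) = 0"
    using d by (simp add: l2inner_Cl analysis_dom_iff Cl_def[symmetric])
  then have "Cl \<psi> (y - y') = 0" by (rule cinner_eq_zero_self)
  then have "y - y' = 0" using d Cl_inj_zero by blast
  then show ?thesis by simp
qed

end


definition Ginv :: "('i \<Rightarrow> 'h::chilbert) \<Rightarrow> 'h \<Rightarrow> 'h" where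
  "Ginv \<psi> h = (THE y. y \<in> analysis_dom \<psi> \<and> Adj \<psi> (coefs \<psi> y) h)"

lemma frame_op_iff:
  "g \<in> frame_op_dom \<psi> \<and> frame_op \<psi> g = h \<longleftrightarrow> g \<in> analysis_dom \<psi> \<and> Adj \<psi> (coefs \<psi> g) h"
proof -
  have m: "g \<in> frame_op_dom \<psi> \<longleftrightarrow> g \<in> analysis_dom \<psi> \<and> coefs \<psi> g \<in> analysis_adj_dom \<psi>"
    by (simp add: frame_op_dom_def coefs_def)
  have f: "frame_op \<psi> g = analysis_adj \<psi> (coefs \<psi> g)" by (simp add: frame_op_def coefs_def)
  show ?thesis unfolding m f
  proof
    assume a: "(g \<in> analysis_dom \<psi> \<and> coefs \<psi> g \<in> analysis_adj_dom \<psi>) \<and> analysis_adj \<psi> (coefs \<psi> g) = h"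
    from a obtain g' where g': "Adj \<psi> (coefs \<psi> g) g'" unfolding analysis_adj_dom_iff by auto
    then have "analysis_adj \<psi> (coefs \<psi> g) = g'" by (rule analysis_adj_eq)
    then show "g \<in> analysis_dom \<psi> \<and> Adj \<psi> (coefs \<psi> g) h" using a g' by simp
  next
    assume a: "g \<in> analysis_dom \<psi> \<and> Adj \<psi> (coefs \<psi> g) h"
    then have "coefs \<psi> g \<in> analysis_adj_dom \<psi>" unfolding analysis_adj_dom_iff by auto
    moreover have "analysis_adj \<psi> (coefs \<psi> g) = h" using a analysis_adj_eq by blast
    ultimately show "(g \<in> analysis_dom \<psi> \<and> coefs \<psi> g \<in> analysis_adj_dom \<psi>) \<and> analysis_adj \<psi> (coefs \<psi> g) = h"
      using a by blast
  qed
qed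

context
  fixes \<psi> :: "'i \<Rightarrow> 'h::chilbert"
  assumes lfs: "lower_frame_sequence \<psi>"
begin

lemma Ginv:
  assumes "h \<in> H_Psi \<psi>"
  shows "Ginv \<psi> h \<in> analysis_dom \<psi>" "Adj \<psi> (coefs \<psi> (Ginv \<psi> h)) h"
proof -
  obtain y where y: "y \<in> analysis_dom \<psi>" "Adj \<psi> (coefs \<psi> y) h"
    using Gamma_surj[OF lfs assms] by blast
  have "\<exists>!y. y \<in> analysis_dom \<psi> \<and> Adj \<psi> (coefs \<psi> y) h"
  proof (rule ex1I[of _ y])
    show "y \<in> analysis_dom \<psi> \<and> Adj \<psi> (coefs \<psi> y) h" using y by blast
    fix y' assume "y' \<in> analysis_dom \<psi> \<and> Adj \<psi> (coefs \<psi> y') h"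
    then show "y' = y" using Gamma_inj[OF lfs _ _ y] by blast
  qed
  then have "Ginv \<psi> h \<in> analysis_dom \<psi> \<and> Adj \<psi> (coefs \<psi> (Ginv \<psi> h)) h"
    unfolding Ginv_def by (rule theI')
  then show "Ginv \<psi> h \<in> analysis_dom \<psi>" "Adj \<psi> (coefs \<psi> (Ginv \<psi> h)) h" by auto
qed

lemma canonical_dual_eq: "canonical_dual \<psi> i = Ginv \<psi> (proj_seq \<psi> i)"
proof -
  have h: "proj_seq \<psi> i \<in> H_Psi \<psi>" by (rule P_in)
  show ?thesis unfolding canonical_dual_def
  proof (rule the_equality)
    show "Ginv \<psi> (proj_seq \<psi> i) \<in> frame_op_dom \<psi> \<and> frame_op \<psi> (Ginv \<psi> (proj_seq \<psi> i)) = proj_seq \<psi> i"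
      unfolding frame_op_iff using Ginv[OF h] by blast
  next
    fix g assume "g \<in> frame_op_dom \<psi> \<and> frame_op \<psi> g = proj_seq \<psi> i"
    then have "g \<in> analysis_dom \<psi>" "Adj \<psi> (coefs \<psi> g) (proj_seq \<psi> i)" unfolding frame_op_iff by auto
    then show "g = Ginv \<psi> (proj_seq \<psi> i)" using Gamma_inj[OF lfs _ _ Ginv[OF h]] by blast
  qed
qed

lemma Adj_coefs_apply:
  assumes "y \<in> analysis_dom \<psi>" "Adj \<psi> (coefs \<psi> y) h" "x \<in> analysis_dom \<psi>"
  shows "cinner (Cl \<psi> x) (Cl \<psi> y) = cinner x h"
proof -
  have "l2inner (coefs \<psi> x) (coefs \<psi> y) = cinner x h" using assms unfolding Adj_def by blast
  moreover have "l2inner (coefs \<psi> x) (coefs \<psi> y) = cinner (Cl \<psi> x) (Cl \<psi> y)"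
    using assms by (simp add: l2inner_Cl analysis_dom_iff Cl_def[symmetric])
  ultimately show ?thesis by simp
qed

lemma S_formula:
  assumes f: "f \<in> H_Psi \<psi>"
  shows "(\<lambda>i. cinner f (canonical_dual \<psi> i)) = coefs \<psi> (Ginv \<psi> f)"
proof
  fix i
  define t where "t = Ginv \<psi> (proj_seq \<psi> i)"
  define y where "y = Ginv \<psi> f"
  have t: "t \<in> analysis_dom \<psi>" "Adj \<psi> (coefs \<psi> t) (proj_seq \<psi> i)" unfolding t_def using Ginv P_in by blast+
  have y: "y \<in> analysis_dom \<psi>" "Adj \<psi> (coefs \<psi> y) f" unfolding y_def using Ginv f by blast+
  have yH: "y \<in> H_Psi \<psi>" using y(1) analysis_dom_H_Psi by blast
  have "cinner y (\<psi> i) = cinner y (proj_seq \<psi> i)" using proj_seq_H[OF yH] by simp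
  also have "\<dots> = cinner (Cl \<psi> y) (Cl \<psi> t)" using Adj_coefs_apply[OF t y(1)] by simp
  also have "\<dots> = cnj (cinner (Cl \<psi> t) (Cl \<psi> y))" by simp
  also have "cinner (Cl \<psi> t) (Cl \<psi> y) = cinner t f" using Adj_coefs_apply[OF y t(1)] by simp
  finally have "cinner y (\<psi> i) = cinner f t" by simp
  then show "cinner f (canonical_dual \<psi> i) = coefs \<psi> (Ginv \<psi> f) i"
    unfolding canonical_dual_eq t_def[symmetric] y_def[symmetric] coefs_def by simp
qed

end


lemma red_synthesis_dom_eq: "red_synthesis_dom \<psi> = synthesis_dom (proj_seq \<psi>)"
  by (simp add: red_synthesis_dom_def)

lemma red_synthesis_eq: "red_synthesis \<psi> = synthesis (proj_seq \<psi>)"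
  by (simp add: red_synthesis_def)

lemma synthesis_proj_in_H:
  assumes "d \<in> synthesis_dom (proj_seq \<psi>)"
  shows "synthesis (proj_seq \<psi>) d \<in> H_Psi \<psi>"
proof -
  obtain s where s: "((\<lambda>i. scaleC (d i) (proj_seq \<psi> i)) has_sum s) UNIV"
    using assms unfolding synthesis_dom_def by blast
  have "s \<in> H_Psi \<psi>"
    by (rule has_sum_in_closed_csubspace[OF csubspace_H_Psi closed_H_Psi s])
       (rule csubspace_scale[OF csubspace_H_Psi P_in])
  moreover have "synthesis (proj_seq \<psi>) d = s" unfolding synthesis_def using s by (rule infsumI)
  ultimately show ?thesis by simp
qed

lemma graph_closure_Adj:
  assumes "(c, g) \<in> graph_closure (red_synthesis_dom \<psi>) (red_synthesis \<psi>)"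
  shows "Adj \<psi> c g"
proof -
  obtain x where x: "\<And>n. x n \<in> synthesis_dom (proj_seq \<psi>)" "l2_lim x c"
    "(\<lambda>n. synthesis (proj_seq \<psi>) (x n)) \<longlonglongrightarrow> g"
    using assms unfolding graph_closure_def red_synthesis_dom_eq red_synthesis_eq by blast
  have c: "c \<in> ell2" and xl: "\<And>n. x n \<in> ell2" and lim: "(\<lambda>n. mkl2 (x n)) \<longlonglongrightarrow> mkl2 c"
    using x(2) unfolding l2_lim_iff by auto
  have gH: "g \<in> H_Psi \<psi>"
    by (rule closed_sequentially[OF closed_H_Psi synthesis_proj_in_H[OF x(1)] x(3)])
  have "l2inner (coefs \<psi> y) c = cinner y g" if y: "y \<in> analysis_dom \<psi>" for y
  proof -
    have yH: "y \<in> H_Psi \<psi>" using y analysis_dom_H_Psi by blast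
    have eq: "cinner (Cl \<psi> y) (mkl2 (x n)) = cinner y (synthesis (proj_seq \<psi>) (x n))" for n
    proof -
      have "cinner (Cl \<psi> y) (mkl2 (x n)) = l2inner (coefs \<psi> y) (x n)" using l2inner_Cl[OF y xl] by simp
      also have "\<dots> = l2inner (coefs (proj_seq \<psi>) y) (x n)" by (simp add: coefs_proj_seq_H[OF yH])
      also have "\<dots> = cinner y (synthesis (proj_seq \<psi>) (x n))" by (rule synthesis_adj[OF x(1)])
      finally show ?thesis .
    qed
    have "(\<lambda>n. cinner (Cl \<psi> y) (mkl2 (x n))) \<longlonglongrightarrow> cinner (Cl \<psi> y) (mkl2 c)"
      by (intro tendsto_intros lim)
    moreover have "(\<lambda>n. cinner y (synthesis (proj_seq \<psi>) (x n))) \<longlonglongrightarrow> cinner y g"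
      by (intro tendsto_intros x(3))
    ultimately have "cinner (Cl \<psi> y) (mkl2 c) = cinner y g" unfolding eq using LIMSEQ_unique by blast
    then show ?thesis using l2inner_Cl[OF y c] by simp
  qed
  then show ?thesis unfolding Adj_def using c gH by blast
qed

lemma Adj_graph_closure:
  assumes a: "Adj \<psi> c g"
  shows "(c, g) \<in> graph_closure (red_synthesis_dom \<psi>) (red_synthesis \<psi>)"
  unfolding red_synthesis_dom_eq red_synthesis_eq
proof (rule adj_in_graph_closure)
  show "c \<in> ell2" using a unfolding Adj_def by blast
  fix x assume x: "x \<in> analysis_dom (proj_seq \<psi>)"
  let ?P = "orth_proj (H_Psi \<psi>)"
  have Px: "?P x \<in> analysis_dom \<psi>"
    using x unfolding analysis_dom_iff coefs_proj_seq .
  have gH: "g \<in> H_Psi \<psi>" using a unfolding Adj_def by blast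
  have "l2inner (coefs (proj_seq \<psi>) x) c = l2inner (coefs \<psi> (?P x)) c" by (simp add: coefs_proj_seq)
  also have "\<dots> = cinner (?P x) g" using a Px unfolding Adj_def by blast
  also have "\<dots> = cinner x g"
  proof -
    have "cinner (x - ?P x) g = 0" by (rule P_orth[OF gH])
    then show ?thesis by (simp add: cinner_diff_left)
  qed
  finally show "l2inner (coefs (proj_seq \<psi>) x) c = cinner x g" .
qed

lemma graph_closure_iff:
  "(c, g) \<in> graph_closure (red_synthesis_dom \<psi>) (red_synthesis \<psi>) \<longleftrightarrow> Adj \<psi> c g"
  using graph_closure_Adj Adj_graph_closure by blast

lemma op_closure_dom_iff:
  "c \<in> op_closure_dom (red_synthesis_dom \<psi>) (red_synthesis \<psi>) \<longleftrightarrow> (\<exists>g. Adj \<psi> c g)"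
  unfolding op_closure_dom_def using graph_closure_iff by force

lemma op_closure_fun_eq:
  assumes "Adj \<psi> c g"
  shows "op_closure_fun (red_synthesis_dom \<psi>) (red_synthesis \<psi>) c = g"
  unfolding op_closure_fun_def graph_closure_iff
  using Adj_unique assms by blast


lemma Adj_zero: "Adj \<psi> (\<lambda>i. 0) 0"
  unfolding Adj_def by (simp add: l2inner_def csubspace_0[OF csubspace_H_Psi])

lemma Adj_delta: "Adj \<psi> (delta j) (proj_seq \<psi> j)"
  unfolding Adj_def
proof (intro conjI ballI)
  show "delta j \<in> ell2" by (rule delta_ell2)
  show "proj_seq \<psi> j \<in> H_Psi \<psi>" by (rule P_in)
  fix x assume "x \<in> analysis_dom \<psi>"
  then have "x \<in> H_Psi \<psi>" using analysis_dom_H_Psi by blast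
  then show "l2inner (coefs \<psi> x) (delta j) = cinner x (proj_seq \<psi> j)"
    by (simp add: l2inner_delta coefs_def proj_seq_H)
qed

context
  fixes \<psi> :: "'i \<Rightarrow> 'h::chilbert"
  assumes lfs: "lower_frame_sequence \<psi>"
begin

lemma RC_iff: "r \<in> RC \<psi> \<longleftrightarrow> (\<exists>x\<in>analysis_dom \<psi>. r = Cl \<psi> x)"
  unfolding RC_def[OF lfs] by blast

definition Q :: "'h set" where
  "Q = {y \<in> analysis_dom \<psi>. \<exists>h. Adj \<psi> (coefs \<psi> y) h}"

lemma image_S:
  "mkl2 ` (\<lambda>f i. cinner f (canonical_dual \<psi> i)) ` H_Psi \<psi> = Cl \<psi> ` Q"
proof (intro set_eqI iffI)
  fix r assume "r \<in> mkl2 ` (\<lambda>f i. cinner f (canonical_dual \<psi> i)) ` H_Psi \<psi>"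
  then obtain f where f: "f \<in> H_Psi \<psi>" "r = mkl2 (\<lambda>i. cinner f (canonical_dual \<psi> i))" by blast
  then have "r = Cl \<psi> (Ginv \<psi> f)" by (simp add: S_formula[OF lfs] Cl_def)
  moreover have "Ginv \<psi> f \<in> Q" unfolding Q_def using Ginv[OF lfs f(1)] by blast
  ultimately show "r \<in> Cl \<psi> ` Q" by blast
next
  fix r assume "r \<in> Cl \<psi> ` Q"
  then obtain y h where y: "y \<in> analysis_dom \<psi>" "Adj \<psi> (coefs \<psi> y) h" "r = Cl \<psi> y"
    unfolding Q_def by blast
  have h: "h \<in> H_Psi \<psi>" using y(2) unfolding Adj_def by blast
  have "Ginv \<psi> h = y" using Gamma_inj[OF lfs Ginv[OF lfs h] y(1,2)] .
  then have "r = mkl2 (\<lambda>i. cinner h (canonical_dual \<psi> i))"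
    using y(3) by (simp add: S_formula[OF lfs h] Cl_def)
  then show "r \<in> mkl2 ` (\<lambda>f i. cinner f (canonical_dual \<psi> i)) ` H_Psi \<psi>" using h by blast
qed

lemma csubspace_ClQ: "csubspace (Cl \<psi> ` Q)"
  unfolding csubspace_def
proof (intro conjI ballI allI)
  have "0 \<in> Q" unfolding Q_def using Adj_zero[of \<psi>] csubspace_0[OF csubspace_analysis_dom]
    by (simp add: coefs_zero) blast
  then show "0 \<in> Cl \<psi> ` Q" using Cl_zero by (metis image_eqI)
next
  fix r s assume "r \<in> Cl \<psi> ` Q" "s \<in> Cl \<psi> ` Q"
  then obtain y y' h h' where y: "y \<in> analysis_dom \<psi>" "Adj \<psi> (coefs \<psi> y) h" "r = Cl \<psi> y"
    and y': "y' \<in> analysis_dom \<psi>" "Adj \<psi> (coefs \<psi> y') h'" "s = Cl \<psi> y'" unfolding Q_def by blast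
  have "y + y' \<in> Q" unfolding Q_def
    using Adj_add[OF y(2) y'(2)] y(1) y'(1) csubspace_add[OF csubspace_analysis_dom]
    by (simp add: coefs_add) blast
  moreover have "r + s = Cl \<psi> (y + y')" using y y' by (simp add: Cl_add)
  ultimately show "r + s \<in> Cl \<psi> ` Q" by blast
next
  fix a r assume "r \<in> Cl \<psi> ` Q"
  then obtain y h where y: "y \<in> analysis_dom \<psi>" "Adj \<psi> (coefs \<psi> y) h" "r = Cl \<psi> y"
    unfolding Q_def by blast
  have "scaleC a y \<in> Q" unfolding Q_def
    using Adj_scale[OF y(2)] y(1) csubspace_scale[OF csubspace_analysis_dom]
    by (simp add: coefs_scale) blast
  moreover have "scaleC a r = Cl \<psi> (scaleC a y)" using y by (simp add: Cl_scale)
  ultimately show "scaleC a r \<in> Cl \<psi> ` Q" by blast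
qed

lemma in_RC:
  assumes c: "c \<in> ell2" and orth: "\<And>d. Adj \<psi> d 0 \<Longrightarrow> l2inner c d = 0"
  shows "mkl2 c \<in> RC \<psi>"
proof -
  have RC: "csubspace (RC \<psi>)" "closed (RC \<psi>)" using csubspace_RC[OF lfs] closed_RC[OF lfs] by auto
  define u where "u = orth_proj (RC \<psi>) (mkl2 c)"
  define v where "v = mkl2 c - u"
  have uR: "u \<in> RC \<psi>" unfolding u_def by (rule orth_proj(1)[OF RC])
  have vo: "cinner v m = 0" if "m \<in> RC \<psi>" for m
    unfolding v_def u_def by (rule orth_proj(2)[OF RC that])
  have "Adj \<psi> (coef v) 0"
    unfolding Adj_def
  proof (intro conjI ballI)
    show "coef v \<in> ell2" by (rule coef_ell2)
    show "0 \<in> H_Psi \<psi>" by (rule csubspace_0[OF csubspace_H_Psi])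
    fix x assume x: "x \<in> analysis_dom \<psi>"
    have "l2inner (coefs \<psi> x) (coef v) = cinner (Cl \<psi> x) v"
      using l2inner_Cl[OF x coef_ell2] by (simp add: mkl2_coef)
    also have "\<dots> = cnj (cinner v (Cl \<psi> x))" by simp
    also have "cinner v (Cl \<psi> x) = 0" using vo x unfolding RC_iff by blast
    finally show "l2inner (coefs \<psi> x) (coef v) = cinner x 0" by simp
  qed
  then have "l2inner c (coef v) = 0" by (rule orth)
  then have cv: "cinner (mkl2 c) v = 0" using l2inner_mkl2[OF c coef_ell2] by (simp add: mkl2_coef)
  have uv: "cinner u v = 0" using vo[OF uR] by (metis cnj_cinner complex_cnj_zero)
  have "cinner v v = cinner (mkl2 c) v - cinner u v" unfolding v_def by (simp add: cinner_diff_left)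
  then have "cinner v v = 0" using cv uv by simp
  then have "v = 0" by (rule cinner_eq_zero_self)
  then show ?thesis using uR unfolding v_def by simp
qed

lemma RC_in_closure_Q:
  assumes x0: "x0 \<in> analysis_dom \<psi>"
  shows "Cl \<psi> x0 \<in> closure (Cl \<psi> ` Q)"
proof -
  define Mc where "Mc = closure (Cl \<psi> ` Q)"
  have M: "csubspace Mc" "closed Mc" unfolding Mc_def using csubspace_closure[OF csubspace_ClQ] by auto
  have QR: "Cl \<psi> ` Q \<subseteq> RC \<psi>"
  proof
    fix r assume "r \<in> Cl \<psi> ` Q"
    then obtain y where "y \<in> Q" "r = Cl \<psi> y" by blast
    then show "r \<in> RC \<psi>" unfolding RC_iff Q_def by blast
  qed
  have McR: "Mc \<subseteq> RC \<psi>" unfolding Mc_def using closure_minimal[OF QR closed_RC[OF lfs]] .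
  define u where "u = orth_proj Mc (Cl \<psi> x0)"
  define v where "v = Cl \<psi> x0 - u"
  have uM: "u \<in> Mc" unfolding u_def by (rule orth_proj(1)[OF M])
  have vo: "cinner v m = 0" if "m \<in> Mc" for m
    unfolding v_def u_def by (rule orth_proj(2)[OF M that])
  have x0R: "Cl \<psi> x0 \<in> RC \<psi>" using x0 RC_iff by blast
  have uR: "u \<in> RC \<psi>" using uM McR by blast
  have "v \<in> RC \<psi>" unfolding v_def by (rule csubspace_diff[OF csubspace_RC[OF lfs] x0R uR])
  then obtain w where w: "w \<in> analysis_dom \<psi>" "v = Cl \<psi> w" unfolding RC_iff by blast
  have wH: "w \<in> H_Psi \<psi>" using w(1) analysis_dom_H_Psi by blast
  define y where "y = Ginv \<psi> w"
  have y: "y \<in> analysis_dom \<psi>" "Adj \<psi> (coefs \<psi> y) w" unfolding y_def using Ginv[OF lfs wH] by auto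
  have "y \<in> Q" unfolding Q_def using y by blast
  then have "Cl \<psi> y \<in> Cl \<psi> ` Q" by (rule imageI)
  then have "Cl \<psi> y \<in> Mc" unfolding Mc_def by (rule subsetD[OF closure_subset])
  then have "cinner (Cl \<psi> w) (Cl \<psi> y) = 0" using vo w(2) by simp
  moreover have "cinner (Cl \<psi> w) (Cl \<psi> y) = cinner w w" by (rule Adj_coefs_apply[OF lfs y w(1)])
  ultimately have "cinner w w = 0" by simp
  then have "w = 0" by (rule cinner_eq_zero_self)
  then have "v = 0" using w(2) Cl_zero by simp
  then show ?thesis using uM unfolding v_def Mc_def by simp
qed

theorem part1:
  "is_pseudo_inverse (H_Psi \<psi>)
     (op_closure_dom (red_synthesis_dom \<psi>) (red_synthesis \<psi>))
     (op_closure_fun (red_synthesis_dom \<psi>) (red_synthesis \<psi>))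
     (H_Psi \<psi>) (\<lambda>f i. cinner f (canonical_dual \<psi> i))"
proof -
  let ?D = "op_closure_dom (red_synthesis_dom \<psi>) (red_synthesis \<psi>)"
  let ?T = "op_closure_fun (red_synthesis_dom \<psi>) (red_synthesis \<psi>)"
  let ?S = "\<lambda>f i. cinner f (canonical_dual \<psi> i)"
  have Sf: "?S f = coefs \<psi> (Ginv \<psi> f)" if "f \<in> H_Psi \<psi>" for f using S_formula[OF lfs that] .
  have S_ell2: "\<forall>f\<in>H_Psi \<psi>. ?S f \<in> ell2"
  proof
    fix f assume f: "f \<in> H_Psi \<psi>"
    have "Ginv \<psi> f \<in> analysis_dom \<psi>" by (rule Ginv(1)[OF lfs f])
    then show "?S f \<in> ell2" unfolding Sf[OF f] analysis_dom_iff .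
  qed
  have D_T: "d \<in> ?D \<longleftrightarrow> (\<exists>g. Adj \<psi> d g)" for d by (rule op_closure_dom_iff)
  have T_eq: "?T d = g" if "Adj \<psi> d g" for d g using op_closure_fun_eq that .
  have kerT: "(\<forall>d\<in>?D. ?T d = 0 \<longrightarrow> l2inner c d = 0) \<longleftrightarrow> (\<forall>d. Adj \<psi> d 0 \<longrightarrow> l2inner c d = 0)" for c
  proof
    assume a: "\<forall>d\<in>?D. ?T d = 0 \<longrightarrow> l2inner c d = 0"
    show "\<forall>d. Adj \<psi> d 0 \<longrightarrow> l2inner c d = 0"
    proof (intro allI impI)
      fix d assume d: "Adj \<psi> d 0"
      then have "d \<in> ?D" using D_T by blast
      moreover have "?T d = 0" using T_eq[OF d] .
      ultimately show "l2inner c d = 0" using a by blast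
    qed
  next
    assume a: "\<forall>d. Adj \<psi> d 0 \<longrightarrow> l2inner c d = 0"
    show "\<forall>d\<in>?D. ?T d = 0 \<longrightarrow> l2inner c d = 0"
    proof (intro ballI impI)
      fix d assume "d \<in> ?D" "?T d = 0"
      then obtain g where g: "Adj \<psi> d g" using D_T by blast
      then have "g = 0" using T_eq[OF g] \<open>?T d = 0\<close> by simp
      then show "l2inner c d = 0" using a g by blast
    qed
  qed
  have cl: "l2closure (?S ` H_Psi \<psi>) = {c \<in> ell2. \<forall>d\<in>?D. ?T d = 0 \<longrightarrow> l2inner c d = 0}"
  proof (intro set_eqI iffI)
    fix c assume "c \<in> l2closure (?S ` H_Psi \<psi>)"
    moreover have "?S ` H_Psi \<psi> \<subseteq> ell2" using S_ell2 by blast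
    ultimately have c: "c \<in> ell2" "mkl2 c \<in> closure (Cl \<psi> ` Q)"
      using l2closure_iff[of "?S ` H_Psi \<psi>" c] unfolding image_S by simp_all
    have "l2inner c d = 0" if d: "Adj \<psi> d 0" for d
    proof -
      have dl: "d \<in> ell2" using d unfolding Adj_def by blast
      have "cinner (mkl2 c) (mkl2 d) = 0"
      proof (rule orth_closure[OF c(2)])
        fix s assume "s \<in> Cl \<psi> ` Q"
        then obtain y where y: "y \<in> analysis_dom \<psi>" "s = Cl \<psi> y" unfolding Q_def by blast
        have "cinner (Cl \<psi> y) (mkl2 d) = l2inner (coefs \<psi> y) d" using l2inner_Cl[OF y(1) dl] by simp
        also have "\<dots> = cinner y 0" using d y(1) unfolding Adj_def by blast
        finally show "cinner s (mkl2 d) = 0" using y by simp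
      qed
      then show ?thesis using l2inner_mkl2[OF c(1) dl] by simp
    qed
    then show "c \<in> {c \<in> ell2. \<forall>d\<in>?D. ?T d = 0 \<longrightarrow> l2inner c d = 0}" using c(1) kerT by blast
  next
    fix c assume "c \<in> {c \<in> ell2. \<forall>d\<in>?D. ?T d = 0 \<longrightarrow> l2inner c d = 0}"
    then have c: "c \<in> ell2" "\<And>d. Adj \<psi> d 0 \<Longrightarrow> l2inner c d = 0" using kerT by auto
    have "mkl2 c \<in> RC \<psi>" by (rule in_RC[OF c])
    then obtain x0 where x0: "x0 \<in> analysis_dom \<psi>" "mkl2 c = Cl \<psi> x0" unfolding RC_iff by blast
    have "mkl2 c \<in> closure (Cl \<psi> ` Q)" using RC_in_closure_Q[OF x0(1)] x0(2) by simp
    moreover have "?S ` H_Psi \<psi> \<subseteq> ell2" using S_ell2 by blast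
    ultimately show "c \<in> l2closure (?S ` H_Psi \<psi>)"
      using l2closure_iff[of "?S ` H_Psi \<psi>" c] c(1) unfolding image_S by simp
  qed
  have ker: "{f \<in> H_Psi \<psi>. ?S f = (\<lambda>i. 0)} = {f \<in> H_Psi \<psi>. \<forall>d\<in>?D. cinner f (?T d) = 0}"
  proof -
    have L: "{f \<in> H_Psi \<psi>. ?S f = (\<lambda>i. 0)} = {0}"
    proof (intro set_eqI iffI)
      fix f assume "f \<in> {f \<in> H_Psi \<psi>. ?S f = (\<lambda>i. 0)}"
      then have f: "f \<in> H_Psi \<psi>" "coefs \<psi> (Ginv \<psi> f) = (\<lambda>i. 0)" using Sf by auto
      have g: "Ginv \<psi> f \<in> analysis_dom \<psi>" "Adj \<psi> (coefs \<psi> (Ginv \<psi> f)) f" using Ginv[OF lfs f(1)] by auto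
      have "Cl \<psi> (Ginv \<psi> f) = 0" using f(2) by (simp add: Cl_def mkl2_zero)
      then have "Ginv \<psi> f = 0" using Cl_inj_zero[OF lfs g(1)] by simp
      have "f = 0"
      proof (rule orth_H_Psi_zero[OF f(1)])
        fix x assume "x \<in> analysis_dom \<psi>"
        then have "l2inner (coefs \<psi> x) (\<lambda>i. 0) = cinner x f" using g(2) f(2) unfolding Adj_def by simp
        then show "cinner x f = 0" by (simp add: l2inner_def)
      qed
      then show "f \<in> {0}" by simp
    next
      fix f assume "f \<in> {0::'h}"
      then show "f \<in> {f \<in> H_Psi \<psi>. ?S f = (\<lambda>i. 0)}"
        using csubspace_0[OF csubspace_H_Psi] by simp
    qed
    have R: "{f \<in> H_Psi \<psi>. \<forall>d\<in>?D. cinner f (?T d) = 0} = {0}"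
    proof (intro set_eqI iffI)
      fix f assume "f \<in> {f \<in> H_Psi \<psi>. \<forall>d\<in>?D. cinner f (?T d) = 0}"
      then have f: "f \<in> H_Psi \<psi>" "\<And>d. d \<in> ?D \<Longrightarrow> cinner f (?T d) = 0" by auto
      have "cinner f (\<psi> j) = 0" for j
      proof -
        have "delta j \<in> ?D" unfolding D_T using Adj_delta[of \<psi> j] by blast
        then have "cinner f (?T (delta j)) = 0" by (rule f(2))
        then have "cinner f (proj_seq \<psi> j) = 0" using T_eq[OF Adj_delta[of \<psi> j]] by simp
        then show ?thesis using proj_seq_H[OF f(1)] by simp
      qed
      then have cf: "coefs \<psi> f = (\<lambda>i. 0)" by (simp add: coefs_def)
      then have fD: "f \<in> analysis_dom \<psi>" by (simp add: analysis_dom_iff)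
      have "Cl \<psi> f = 0" using cf by (simp add: Cl_def mkl2_zero)
      then have "f = 0" by (rule Cl_inj_zero[OF lfs fD])
      then show "f \<in> {0}" by simp
    next
      fix f assume "f \<in> {0::'h}"
      then show "f \<in> {f \<in> H_Psi \<psi>. \<forall>d\<in>?D. cinner f (?T d) = 0}"
        using csubspace_0[OF csubspace_H_Psi] by simp
    qed
    show ?thesis using L R by simp
  qed
  have last: "\<forall>d\<in>?D. ?T d \<in> H_Psi \<psi> \<and> ?S (?T d) \<in> ?D \<and> ?T (?S (?T d)) = ?T d"
  proof
    fix d assume "d \<in> ?D"
    then obtain g where g: "Adj \<psi> d g" using D_T by blast
    have Td: "?T d = g" by (rule T_eq[OF g])
    have gH: "g \<in> H_Psi \<psi>" using g unfolding Adj_def by blast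
    have a: "Adj \<psi> (?S g) g" using Ginv[OF lfs gH] Sf[OF gH] by simp
    have "?S g \<in> ?D" using a D_T by blast
    moreover have "?T (?S g) = g" by (rule T_eq[OF a])
    ultimately show "?T d \<in> H_Psi \<psi> \<and> ?S (?T d) \<in> ?D \<and> ?T (?S (?T d)) = ?T d"
      unfolding Td using gH by simp
  qed
  show ?thesis unfolding is_pseudo_inverse_def
    using S_ell2 cl ker last by (intro conjI subset_refl)
qed

end


lemma l2inner_zero_right: "l2inner c (\<lambda>i. 0) = 0"
  by (simp add: l2inner_def)

lemma closable_H_Psi_UNIV:
  fixes \<psi> :: "'i \<Rightarrow> 'h::chilbert"
  assumes cl: "closable (synthesis_dom \<psi>) (synthesis \<psi>)"
  shows "H_Psi \<psi> = UNIV"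
proof (rule ccontr)
  assume "H_Psi \<psi> \<noteq> UNIV"
  then obtain f where f: "f \<notin> H_Psi \<psi>" by blast
  define z where "z = f - orth_proj (H_Psi \<psi>) f"
  have zo: "cinner z m = 0" if "m \<in> H_Psi \<psi>" for m unfolding z_def by (rule P_orth[OF that])
  have "z \<noteq> 0"
  proof
    assume "z = 0"
    then have "f = orth_proj (H_Psi \<psi>) f" unfolding z_def by simp
    then show False using f P_in by metis
  qed
  have g1: "((\<lambda>i. 0), z) \<in> graph_closure (synthesis_dom \<psi>) (synthesis \<psi>)"
  proof (rule adj_in_graph_closure)
    show "(\<lambda>i. 0) \<in> ell2" by simp
    fix x assume "x \<in> analysis_dom \<psi>"
    then have "x \<in> H_Psi \<psi>" using analysis_dom_H_Psi by blast
    then have "cinner z x = 0" by (rule zo)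
    then have "cinner x z = 0" by (metis cnj_cinner complex_cnj_zero)
    then show "l2inner (coefs \<psi> x) (\<lambda>i. 0) = cinner x z" by (simp add: l2inner_zero_right)
  qed
  have g2: "((\<lambda>i. 0), 0) \<in> graph_closure (synthesis_dom \<psi>) (synthesis \<psi>)"
    by (rule adj_in_graph_closure) (simp_all add: l2inner_zero_right)
  have "z = 0" using cl g1 g2 unfolding closable_def by blast
  then show False using \<open>z \<noteq> 0\<close> by simp
qed

lemma orth_proj_UNIV: "orth_proj (UNIV :: 'h::chilbert set) v = v"
  by (rule orth_proj_eq) (auto simp: csubspace_def)

theorem theorem6p14:
  fixes \<psi> :: "'i::countable \<Rightarrow> 'h::{chilbert, second_countable_topology}"
  assumes "lower_frame_sequence \<psi>"
  shows "is_pseudo_inverse (H_Psi \<psi>)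
           (op_closure_dom (red_synthesis_dom \<psi>) (red_synthesis \<psi>))
           (op_closure_fun (red_synthesis_dom \<psi>) (red_synthesis \<psi>))
           (H_Psi \<psi>) (\<lambda>f i. cinner f (canonical_dual \<psi> i))
       \<and> (closable (synthesis_dom \<psi>) (synthesis \<psi>) \<longrightarrow>
          is_pseudo_inverse UNIV
           (op_closure_dom (synthesis_dom \<psi>) (synthesis \<psi>))
           (op_closure_fun (synthesis_dom \<psi>) (synthesis \<psi>))
           UNIV (\<lambda>f i. cinner f (canonical_dual \<psi> i)))"
proof (intro conjI impI)
  show P1: "is_pseudo_inverse (H_Psi \<psi>)
           (op_closure_dom (red_synthesis_dom \<psi>) (red_synthesis \<psi>))
           (op_closure_fun (red_synthesis_dom \<psi>) (red_synthesis \<psi>))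
           (H_Psi \<psi>) (\<lambda>f i. cinner f (canonical_dual \<psi> i))"
    by (rule part1[OF assms])
  assume cl: "closable (synthesis_dom \<psi>) (synthesis \<psi>)"
  have HU: "H_Psi \<psi> = UNIV" by (rule closable_H_Psi_UNIV[OF cl])
  have ps: "(\<lambda>i. orth_proj (H_Psi \<psi>) (\<psi> i)) = \<psi>" unfolding HU orth_proj_UNIV ..
  have r1: "red_synthesis_dom \<psi> = synthesis_dom \<psi>" unfolding red_synthesis_dom_def ps ..
  have r2: "red_synthesis \<psi> = synthesis \<psi>" unfolding red_synthesis_def ps ..
  show "is_pseudo_inverse UNIV
           (op_closure_dom (synthesis_dom \<psi>) (synthesis \<psi>))
           (op_closure_fun (synthesis_dom \<psi>) (synthesis \<psi>))
           UNIV (\<lambda>f i. cinner f (canonical_dual \<psi> i))"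
    using P1 unfolding r1 r2 HU .
qed


end
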